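(* A chromosome-set $\mathfrak{C}$ equals $\mathrm{CPC}(\mathfrak{G})$ for some finite non-redundant assembly graph $\mathfrak{G}$ if and only if $\mathfrak{C}$ is finitely conducting, i.e. there is $K$ such that every finite string of length at least $K$ is a conductor for $\mathfrak{C}$.
   Context: All strings are over a fixed finite alphabet $\Sigma$. A cyclic string is a bi-infinite periodic word $\mathbb{Z}\to\Sigma$, considered up to shifting indices; for a nonempty finite string $x$, $\langle x\rangle$ is the cyclic string repeating $x$ in both directions. A chromosome-set is a set of cyclic strings. A string $u$ is a proper infix of $w$ if $w=aub$ with $a,b$ nonempty. A finite string $v$ is a conductor for $\mathfrak{C}$ if for all nonempty finite strings $a,b$ such that $va$ and $vb$ both end with $v$, we have $\langle ab\rangle\in\mathfrak{C}$ if and only if $\langle a\rangle\in\mathfrak{C}$ and $\langle b\rangle\in\mathfrak{C}$. An abstract assembly graph is a finite directed multigraph in which each vertex and edge carries a label (a finite or cyclic string) such that for every edge $e$ from $u$ to $v$, $Label(u)$ is a prefix and $Label(v)$ a suffix of $Label(e)$. An edge $e$ from $u$ to $v$ is a prefix edge if $Label(e)=Label(v)$, a suffix edge if $Label(e)=Label(u)$. An assembly graph is an abstract assembly graph in which every vertex and edge lies on a directed cycle and no edge is both a prefix and a suffix edge. The label of a walk $v_0,e_1,\dots,e_n,v_n$ is $Label(e_1)$ followed, for $i\ge 2$, by $Label(e_i)$ with its first $|Label(v_{i-1})|$ characters removed; a walk with no edges has its vertex label. A circuit is a primitive closed walk up to rotation; if its walk label is $Label(v_0)x$, its label is $\langle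 x\rangle$. $\mathrm{CPC}(\mathfrak{G})$ is the set of circuit labels. $P$ is an inner subwalk of $Q$ if $Q=APB$ with walks $A,B$ each having at least one edge. The graph is non-redundant if whenever $Label(P)$ is a proper infix of $Label(Q)$ for walks $P,Q$, $P$ is an inner subwalk of $Q$. *)

theory Defs
  imports Main "HOL-Library.Sublist"
begin

text \<open>A cyclic string is a bi-infinite periodic word from int to the alphabet, taken up to shifting
indices; we represent it as its shift-orbit (a set of bi-infinite words).\<close>

definition cyc :: "'a list \<Rightarrow> (int \<Rightarrow> 'a) set" where
  "cyc x = {(\<lambda>i. x ! nat ((i + k) mod int (length x))) | k. True}"

definition is_cyclic :: "(int \<Rightarrow> 'a) set \<Rightarrow> bool" where
  "is_cyclic c \<longleftrightarrow> (\<exists>x. x \<noteq> [] \<and> c = cyc x)"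

definition chromosome_set :: "(int \<Rightarrow> 'a) set set \<Rightarrow> bool" where
  "chromosome_set C \<longleftrightarrow> (\<forall>c\<in>C. is_cyclic c)"

definition conductor :: "(int \<Rightarrow> 'a) set set \<Rightarrow> 'a list \<Rightarrow> bool" where
  "conductor C v \<longleftrightarrow>
     (\<forall>a b. a \<noteq> [] \<longrightarrow> b \<noteq> [] \<longrightarrow> suffix v (v @ a) \<longrightarrow> suffix v (v @ b) \<longrightarrow>
        (cyc (a @ b) \<in> C \<longleftrightarrow> cyc a \<in> C \<and> cyc b \<in> C))"

definition finitely_conducting :: "(int \<Rightarrow> 'a) set set \<Rightarrow> bool" where
  "finitely_conducting C \<longleftrightarrow> (\<exists>K::nat. \<forall>v. length v \<ge> K \<longrightarrow> conductor C v)"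

record ('v, 'e, 'a) agraph =
  verts :: "'v set"
  arcs :: "'e set"
  tail :: "'e \<Rightarrow> 'v"
  head :: "'e \<Rightarrow> 'v"
  vlab :: "'v \<Rightarrow> 'a list"
  elab :: "'e \<Rightarrow> 'a list"

definition finite_graph :: "('v, 'e, 'a) agraph \<Rightarrow> bool" where
  "finite_graph G \<longleftrightarrow> finite (verts G) \<and> finite (arcs G)"

definition abstract_assembly_graph :: "('v, 'e, 'a) agraph \<Rightarrow> bool" where
  "abstract_assembly_graph G \<longleftrightarrow>
     (\<forall>e\<in>arcs G. tail G e \<in> verts G \<and> head G e \<in> verts G \<and>
        prefix (vlab G (tail G e)) (elab G e) \<and> suffix (vlab G (head G e)) (elab G e))"

definition prefix_edge :: "('v, 'e, 'a) agraph \<Rightarrow> 'e \<Rightarrow> bool" where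
  "prefix_edge G e \<longleftrightarrow> elab G e = vlab G (head G e)"

definition suffix_edge :: "('v, 'e, 'a) agraph \<Rightarrow> 'e \<Rightarrow> bool" where
  "suffix_edge G e \<longleftrightarrow> elab G e = vlab G (tail G e)"

fun is_walk :: "('v, 'e, 'a) agraph \<Rightarrow> 'v \<Rightarrow> 'e list \<Rightarrow> bool" where
  "is_walk G v [] \<longleftrightarrow> v \<in> verts G"
| "is_walk G v (e # es) \<longleftrightarrow>
     v \<in> verts G \<and> e \<in> arcs G \<and> tail G e = v \<and> is_walk G (head G e) es"

definition walk_end :: "('v, 'e, 'a) agraph \<Rightarrow> 'v \<Rightarrow> 'e list \<Rightarrow> 'v" where
  "walk_end G v es = (if es = [] then v else head G (last es))"

fun walk_label :: "('v, 'e, 'a) agraph \<Rightarrow> 'v \<Rightarrow> 'e list \<Rightarrow> 'a list" where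
  "walk_label G v [] = vlab G v"
| "walk_label G v (e # es) =
     elab G e @ concat (map (\<lambda>e'. drop (length (vlab G (tail G e'))) (elab G e')) es)"

definition directed_cycle :: "('v, 'e, 'a) agraph \<Rightarrow> 'v \<Rightarrow> 'e list \<Rightarrow> bool" where
  "directed_cycle G v es \<longleftrightarrow>
     is_walk G v es \<and> es \<noteq> [] \<and> walk_end G v es = v \<and> distinct (map (tail G) es)"

definition assembly_graph :: "('v, 'e, 'a) agraph \<Rightarrow> bool" where
  "assembly_graph G \<longleftrightarrow> abstract_assembly_graph G \<and>
     (\<forall>u\<in>verts G. \<exists>v es. directed_cycle G v es \<and> u \<in> tail G ` set es) \<and>
     (\<forall>e\<in>arcs G. \<exists>v es. directed_cycle G v es \<and> e \<in> set es) \<and>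
     (\<forall>e\<in>arcs G. \<not> (prefix_edge G e \<and> suffix_edge G e))"

definition primitive_list :: "'b list \<Rightarrow> bool" where
  "primitive_list xs \<longleftrightarrow> \<not> (\<exists>ys k. k \<ge> 2 \<and> xs = concat (replicate k ys))"

text \<open>Circuits: primitive closed walks with at least one edge (rotation does not
change the cyclic label). If the walk label is Label(v0) x, the circuit label is <x>.\<close>

definition CPC :: "('v, 'e, 'a) agraph \<Rightarrow> (int \<Rightarrow> 'a) set set" where
  "CPC G = {cyc (drop (length (vlab G v)) (walk_label G v es)) | v es.
              is_walk G v es \<and> es \<noteq> [] \<and> walk_end G v es = v \<and> primitive_list es}"

definition proper_infix :: "'a list \<Rightarrow> 'a list \<Rightarrow> bool" where
  "proper_infix u w \<longleftrightarrow> (\<exists>a b. a \<noteq> [] \<and> b \<noteq> [] \<and> w = a @ u @ b)"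

definition inner_subwalk :: "('v, 'e, 'a) agraph \<Rightarrow> 'v \<Rightarrow> 'e list \<Rightarrow> 'v \<Rightarrow> 'e list \<Rightarrow> bool" where
  "inner_subwalk G pv pes qv qes \<longleftrightarrow>
     (\<exists>as bs. as \<noteq> [] \<and> bs \<noteq> [] \<and> qes = as @ pes @ bs \<and> is_walk G qv as \<and>
        walk_end G qv as = pv \<and> is_walk G pv pes \<and>
        is_walk G (walk_end G pv pes) bs)"

definition non_redundant :: "('v, 'e, 'a) agraph \<Rightarrow> bool" where
  "non_redundant G \<longleftrightarrow>
     (\<forall>pv pes qv qes. is_walk G pv pes \<longrightarrow> is_walk G qv qes \<longrightarrow>
        proper_infix (walk_label G pv pes) (walk_label G qv qes) \<longrightarrow>
        inner_subwalk G pv pes qv qes)"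

end

theory Submission
  imports Defs
begin


definition per :: "'a list \<Rightarrow> int \<Rightarrow> 'a" where
  "per x = (\<lambda>i. x ! nat (i mod int (length x)))"

definition shift :: "int \<Rightarrow> (int \<Rightarrow> 'a) \<Rightarrow> int \<Rightarrow> 'a" where
  "shift k f = (\<lambda>i. f (i + k))"

definition win :: "(int \<Rightarrow> 'a) \<Rightarrow> int \<Rightarrow> nat \<Rightarrow> 'a list" where
  "win f i n = map (\<lambda>j. f (i + int j)) [0..<n]"

definition periodic :: "(int \<Rightarrow> 'a) \<Rightarrow> nat \<Rightarrow> bool" where
  "periodic f p \<longleftrightarrow> (\<forall>i. f (i + int p) = f i)"

lemma cyc_eq: "cyc x = range (\<lambda>k. shift k (per x))"
  unfolding cyc_def shift_def per_def by auto

lemma shift_shift[simp]: "shift k (shift j f) = shift (j + k) f"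
  unfolding shift_def by (simp add: add.assoc add.commute add.left_commute)

lemma shift_0[simp]: "shift 0 f = f"
  unfolding shift_def by simp

lemma range_shift_mem:
  assumes "g \<in> range (\<lambda>k. shift k f)"
  shows "range (\<lambda>k. shift k g) = range (\<lambda>k. shift k f)"
proof -
  obtain j where g: "g = shift j f" using assms by auto
  show ?thesis
  proof
    show "range (\<lambda>k. shift k g) \<subseteq> range (\<lambda>k. shift k f)" using g by auto
    show "range (\<lambda>k. shift k f) \<subseteq> range (\<lambda>k. shift k g)"
    proof
      fix h assume "h \<in> range (\<lambda>k. shift k f)"
      then obtain k where "h = shift k f" by auto
      hence "h = shift (k - j) g" using g by simp
      thus "h \<in> range (\<lambda>k. shift k g)" by blast
    qed
  qed
qed

lemma cyc_mem: "f \<in> cyc x \<Longrightarrow> cyc x = range (\<lambda>k. shift k f)"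
  using range_shift_mem cyc_eq by metis

lemma periodic_mult:
  assumes "periodic f p"
  shows "f (i + int p * m) = f i"
proof -
  have up: "f (i + int p * int n) = f i" for i n
  proof (induction n arbitrary: i)
    case 0 then show ?case by simp
  next
    case (Suc n)
    have "f (i + int p * int (Suc n)) = f ((i + int p * int n) + int p)"
      by (simp add: algebra_simps)
    also have "\<dots> = f (i + int p * int n)" using assms unfolding periodic_def by blast
    finally show ?case using Suc by simp
  qed
  show ?thesis
  proof (cases "m \<ge> 0")
    case True
    then show ?thesis using up[of i "nat m"] by simp
  next
    case False
    then have "f ((i + int p * m) + int p * int (nat (- m))) = f (i + int p * m)" using up by blast
    moreover have "(i + int p * m) + int p * int (nat (- m)) = i" using False by (simp add: algebra_simps)
    ultimately show ?thesis by metis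
  qed
qed

lemma periodic_mod:
  assumes "periodic f p" "p > 0"
  shows "f (i mod int p) = f i"
proof -
  have "i mod int p = i + int p * (- (i div int p))"
    by (simp add: algebra_simps minus_div_mult_eq_mod [symmetric])
  then show ?thesis using periodic_mult[OF assms(1), of i "- (i div int p)"] by simp
qed

lemma per_periodic: "x \<noteq> [] \<Longrightarrow> periodic (per x) (length x)"
  unfolding periodic_def per_def by simp

lemma length_win[simp]: "length (win f i n) = n"
  unfolding win_def by simp

lemma nth_win[simp]: "j < n \<Longrightarrow> win f i n ! j = f (i + int j)"
  unfolding win_def by simp

lemma win_0[simp]: "win f i 0 = []"
  unfolding win_def by simp

lemma win_add: "win f i (n + m) = win f i n @ win f (i + int n) m"
  by (rule nth_equalityI) (auto simp: nth_append add.assoc)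

lemma take_win: "k \<le> n \<Longrightarrow> take k (win f i n) = win f i k"
  by (rule nth_equalityI) auto

lemma drop_win: "k \<le> n \<Longrightarrow> drop k (win f i n) = win f (i + int k) (n - k)"
  by (rule nth_equalityI) (auto simp: add.assoc)

lemma win_shift: "win (shift k f) i n = win f (i + k) n"
  unfolding win_def shift_def by (simp add: algebra_simps)

lemma win_periodic_shift:
  assumes "periodic f p"
  shows "win f (i + int p * m) n = win f i n"
  unfolding win_def using periodic_mult[OF assms] by (simp add: algebra_simps)
    (metis (no_types, lifting) add.assoc add.commute periodic_mult[OF assms])

lemma per_win:
  assumes "periodic f p" "p > 0"
  shows "per (win f j p) = shift j f"
proof
  fix i
  have "per (win f j p) i = f (j + (i mod int p))"
    unfolding per_def using assms(2) by (simp add: nat_less_iff)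
  also have "\<dots> = shift j f i"
  proof -
    have "periodic (shift j f) p" using assms(1) unfolding periodic_def shift_def
      by (metis add.assoc add.commute)
    hence "shift j f (i mod int p) = shift j f i" using periodic_mod assms(2) by blast
    thus ?thesis unfolding shift_def by (simp add: add.commute)
  qed
  finally show "per (win f j p) i = shift j f i" .
qed

lemma cyc_win:
  assumes "periodic f p" "p > 0"
  shows "cyc (win f j p) = range (\<lambda>k. shift k f)"
  using cyc_eq[of "win f j p"] per_win[OF assms] range_shift_mem[of "shift j f" f] by auto

lemma win_per_self: "x \<noteq> [] \<Longrightarrow> win (per x) 0 (length x) = x"
  by (rule nth_equalityI) (auto simp: per_def)

lemma win_per_rep: "x \<noteq> [] \<Longrightarrow> win (per x) 0 (m * length x) = concat (replicate m x)"
proof (induction m)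
  case 0 then show ?case by simp
next
  case (Suc m)
  have "win (per x) 0 (Suc m * length x) = win (per x) 0 (length x + m * length x)" by simp
  also have "\<dots> = x @ win (per x) (int (length x)) (m * length x)"
    using win_add win_per_self[OF Suc.prems] by (metis add_0)
  also have "win (per x) (int (length x)) (m * length x) = win (per x) 0 (m * length x)"
    using win_periodic_shift[OF per_periodic[OF Suc.prems], of 0 1] by simp
  finally show ?case using Suc by simp
qed

lemma periodic_per_rep: "x \<noteq> [] \<Longrightarrow> m > 0 \<Longrightarrow> periodic (per x) (m * length x)"
  unfolding periodic_def using periodic_mult[OF per_periodic, of x _ "int m"]
  by (simp add: mult.commute)

lemma cyc_rep: assumes "x \<noteq> []" "m > 0" shows "cyc (concat (replicate m x)) = cyc x"
proof -
  have "cyc (concat (replicate m x)) = range (\<lambda>k. shift k (per x))"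
    using cyc_win[OF periodic_per_rep[OF assms], of 0] win_per_rep[OF assms(1)] assms by simp
  thus ?thesis using cyc_eq by metis
qed

lemma rotate_win: "x \<noteq> [] \<Longrightarrow> rotate r x = win (per x) (int r) (length x)"
  apply (rule nth_equalityI)
   apply simp
  apply (simp add: nth_rotate per_def)
  by (metis add.commute nat_int nat_mod_as_int of_nat_add)

lemma cyc_rotate: assumes "x \<noteq> []" shows "cyc (rotate r x) = cyc x"
  using cyc_win[OF per_periodic[OF assms], of "int r"] rotate_win[OF assms] cyc_eq[of x]
  using assms by simp

lemma cyc_append_commute: assumes "x @ y \<noteq> []" shows "cyc (x @ y) = cyc (y @ x)"
  using cyc_rotate[OF assms, of "length x"] by (simp add: rotate_append)

lemma conj_rotate:
  "u @ a = a' @ u \<Longrightarrow> a \<noteq> [] \<Longrightarrow> \<exists>r. a' = rotate r a"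
proof (induction "length u" arbitrary: u rule: less_induct)
  case less
  have la: "length a' = length a" using less.prems(1) by (metis add_left_cancel length_append add.commute)
  show ?case
  proof (cases "length a \<le> length u")
    case True
    have "take (length a) (u @ a) = take (length a) (a' @ u)" using less.prems(1) by simp
    hence a'u: "a' = take (length a) u" using True la by simp
    define u2 where "u2 = drop (length a) u"
    have u: "u = a' @ u2" unfolding u2_def a'u by simp
    have "u2 @ a = a' @ u2" using less.prems(1) unfolding u by simp
    moreover have "length u2 < length u"
    proof -
      have "length a > 0" using less.prems(2) by simp
      thus ?thesis using True unfolding u2_def length_drop by linarith
    qed
    ultimately show ?thesis using less.hyps less.prems(2) by blast
  next
    case False
    define q where "q = take (length a - length u) a"
    have "take (length a) (u @ a) = take (length a) (a' @ u)" using less.prems(1) by simp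
    hence a': "a' = u @ q" using False la unfolding q_def by simp
    hence "u @ a = u @ q @ u" using less.prems(1) by simp
    hence a: "a = q @ u" by simp
    have "a' = rotate (length q) a" unfolding a a' by (simp add: rotate_append)
    thus ?thesis by blast
  qed
qed

lemma cyc_conj: "u @ a = a' @ u \<Longrightarrow> a \<noteq> [] \<Longrightarrow> cyc a' = cyc a"
  using conj_rotate cyc_rotate by metis

lemma suffix_power:
  assumes "v @ w = w1 @ v"
  shows "v @ concat (replicate N w) = concat (replicate N w1) @ v"
proof (induction N)
  case 0 then show ?case by simp
next
  case (Suc N)
  have "v @ concat (replicate (Suc N) w) = (v @ concat (replicate N w)) @ w"
    by (simp add: replicate_append_same[symmetric] del: replicate_append_same)
  also have "\<dots> = concat (replicate N w1) @ v @ w" using Suc by simp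
  also have "\<dots> = concat (replicate (Suc N) w1) @ v" using assms
    by (simp add: replicate_append_same[symmetric] del: replicate_append_same)
  finally show ?case .
qed

lemma window_of_per:
  assumes "v @ w = w1 @ v" "w \<noteq> []"
  shows "\<exists>p. win (per w) p (length v + length w) = v @ w"
proof -
  define N where "N = length v"
  have lw: "length w1 = length w" using assms(1) by (metis add_left_cancel length_append add.commute)
  have eq: "v @ concat (replicate N w) = concat (replicate N w1) @ v" using suffix_power[OF assms(1)] .
  have lenN: "length (concat (replicate N w)) \<ge> length v"
    unfolding N_def using assms(2) by (simp add: length_concat sum_list_replicate)
      (metis Suc_le_eq le_trans length_greater_0_conv mult_le_mono1 mult_Suc_right order.refl le_add2 mult.commute)
  have "suffix v (concat (replicate N w))"
  proof -
    have "suffix (concat (replicate N w)) (concat (replicate N w1) @ v)" using eq by (metis suffixI)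
    moreover have "suffix v (concat (replicate N w1) @ v)" by (simp add: suffix_def)
    ultimately show ?thesis using lenN suffix_length_suffix by blast
  qed
  then obtain X where X: "concat (replicate N w) = X @ v" by (auto simp: suffix_def)
  have "win (per w) 0 (Suc N * length w) = X @ v @ w"
    using win_per_rep[OF assms(2), of "Suc N"] X by (simp add: replicate_append_same[symmetric] del: replicate_append_same)
  hence "drop (length X) (win (per w) 0 (Suc N * length w)) = v @ w" by simp
  moreover have "length X + (length v + length w) = Suc N * length w"
    using X by (metis \<open>win (per w) 0 (Suc N * length w) = X @ v @ w\<close> length_append length_win)
  moreover have "length v + length w = Suc N * length w - length X" using calculation(2) by linarith
  ultimately have "win (per w) (int (length X)) (length v + length w) = v @ w"
    using drop_win[of "length X" "Suc N * length w" "per w" 0] by (metis add_0 le_add1)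
  thus ?thesis by blast
qed


definition step :: "('v, 'e, 'a) agraph \<Rightarrow> 'e \<Rightarrow> 'a list" where
  "step G e = drop (length (vlab G (tail G e))) (elab G e)"

definition steps :: "('v, 'e, 'a) agraph \<Rightarrow> 'e list \<Rightarrow> 'a list" where
  "steps G es = concat (map (step G) es)"

lemma steps_Nil[simp]: "steps G [] = []" by (simp add: steps_def)
lemma steps_Cons[simp]: "steps G (e # es) = step G e @ steps G es" by (simp add: steps_def)
lemma steps_append[simp]: "steps G (xs @ ys) = steps G xs @ steps G ys" by (simp add: steps_def)
lemma steps_rep: "steps G (concat (replicate m ws)) = concat (replicate m (steps G ws))"
  by (induction m) auto

lemma walk_end_Nil[simp]: "walk_end G v [] = v" by (simp add: walk_end_def)
lemma walk_end_Cons[simp]: "walk_end G v (e # xs) = walk_end G (head G e) xs"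
  by (simp add: walk_end_def)
lemma walk_end_append: "walk_end G v (xs @ ys) = walk_end G (walk_end G v xs) ys"
  by (induction xs arbitrary: v) auto
lemma walk_end_indep: "ys \<noteq> [] \<Longrightarrow> walk_end G v ys = walk_end G w ys"
  by (simp add: walk_end_def)

lemma is_walk_verts: "is_walk G v es \<Longrightarrow> v \<in> verts G"
  by (cases es) auto

lemma is_walk_append: "is_walk G v (xs @ ys) \<longleftrightarrow> is_walk G v xs \<and> is_walk G (walk_end G v xs) ys"
  by (induction xs arbitrary: v) (auto dest: is_walk_verts)

lemma walk_end_verts: "is_walk G v es \<Longrightarrow> walk_end G v es \<in> verts G"
  by (induction es arbitrary: v) auto

lemma is_walk_arcs: "is_walk G v es \<Longrightarrow> set es \<subseteq> arcs G"
  by (induction es arbitrary: v) auto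

lemma elab_split:
  assumes "abstract_assembly_graph G" "e \<in> arcs G"
  shows "elab G e = vlab G (tail G e) @ step G e"
  using assms unfolding abstract_assembly_graph_def step_def prefix_def by auto

lemma walk_label_steps:
  assumes "abstract_assembly_graph G" "is_walk G v es"
  shows "walk_label G v es = vlab G v @ steps G es"
proof (cases es)
  case Nil then show ?thesis by simp
next
  case (Cons e es')
  have "walk_label G v es = elab G e @ steps G es'"
    unfolding Cons steps_def step_def by simp
  moreover have "elab G e = vlab G v @ step G e" using elab_split[OF assms(1)] assms(2) Cons by auto
  ultimately show ?thesis using Cons by simp
qed

lemma walk_suffix:
  assumes "abstract_assembly_graph G" "is_walk G v es"
  shows "suffix (vlab G (walk_end G v es)) (vlab G v @ steps G es)"
  using assms(2)
proof (induction es rule: rev_induct)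
  case Nil then show ?case by simp
next
  case (snoc e es)
  have w: "is_walk G v es" and e: "e \<in> arcs G" "tail G e = walk_end G v es"
    using snoc.prems is_walk_append[of G v es "[e]"] by auto
  obtain Y where Y: "vlab G v @ steps G es = Y @ vlab G (tail G e)"
    using snoc.IH[OF w] e by (auto simp: suffix_def)
  have "vlab G v @ steps G (es @ [e]) = Y @ elab G e"
    using Y elab_split[OF assms(1) e(1)] by simp
  moreover have "suffix (vlab G (head G e)) (elab G e)"
    using assms(1) e(1) unfolding abstract_assembly_graph_def by auto
  moreover have "walk_end G v (es @ [e]) = head G e" by (simp add: walk_end_def)
  ultimately show ?case by (metis suffix_appendI)
qed

lemma closed_rep:
  assumes "is_walk G v ws" "walk_end G v ws = v"
  shows "is_walk G v (concat (replicate m ws)) \<and> walk_end G v (concat (replicate m ws)) = v"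
proof (induction m)
  case 0 then show ?case using is_walk_verts[OF assms(1)] by simp
next
  case (Suc m)
  then show ?case using assms by (simp add: is_walk_append walk_end_append)
qed

lemma concat_rep_mult: "concat (replicate k (concat (replicate j zs))) = concat (replicate (k * j) zs)"
  by (induction k) (auto simp: replicate_add)

lemma prim_root:
  "xs \<noteq> [] \<Longrightarrow> \<exists>ys k. k > 0 \<and> xs = concat (replicate k ys) \<and> primitive_list ys \<and> ys \<noteq> []"
proof (induction "length xs" arbitrary: xs rule: less_induct)
  case less
  show ?case
  proof (cases "primitive_list xs")
    case True
    then show ?thesis using less.prems by (intro exI[of _ xs] exI[of _ 1]) auto
  next
    case False
    then obtain ys k where k: "k \<ge> 2" "xs = concat (replicate k ys)"
      unfolding primitive_list_def by auto
    have ys: "ys \<noteq> []" using k less.prems by auto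
    have "length xs = k * length ys" using k by (simp add: length_concat sum_list_replicate)
    hence "length ys < length xs" using k(1) ys
      by (metis One_nat_def length_greater_0_conv less_le_trans mult_less_mono1 mult_1 one_less_numeral_iff semiring_norm(76) numeral_le_iff Suc_1 Suc_le_eq)
    then obtain zs j where "j > 0" "ys = concat (replicate j zs)" "primitive_list zs" "zs \<noteq> []"
      using less.hyps ys by blast
    then show ?thesis using k concat_rep_mult[of k j zs]
      by (intro exI[of _ zs] exI[of _ "k * j"]) auto
  qed
qed

lemma CPC_closed:
  assumes G: "abstract_assembly_graph G"
    and R: "is_walk G y R" "R \<noteq> []" "walk_end G y R = y"
  shows "cyc (steps G R) \<in> CPC G"
proof -
  obtain ys k where k: "k > 0" "R = concat (replicate k ys)" "primitive_list ys" "ys \<noteq> []"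
    using prim_root[OF R(2)] by blast
  have Rsplit: "R = ys @ concat (replicate (k - 1) ys)" using k(1,2)
    by (metis Suc_diff_1 concat.simps(2) replicate_Suc)
  have wy: "is_walk G y ys" using R(1) Rsplit is_walk_append by metis
  have Rsplit2: "R = concat (replicate (k - 1) ys) @ ys" using k(1,2)
    by (metis Suc_diff_1 replicate_append_same concat_append concat.simps append_Nil2 replicate_Suc concat_replicate_trivial)
  have ey: "walk_end G y ys = y"
    using R(3) Rsplit2 walk_end_append walk_end_indep k(4) by metis
  have lab: "drop (length (vlab G y)) (walk_label G y ys) = steps G ys"
    using walk_label_steps[OF G wy] by simp
  have "cyc (steps G ys) \<in> CPC G"
    unfolding CPC_def using wy ey k(3,4) lab by (metis (mono_tags, lifting) mem_Collect_eq)
  moreover have "cyc (steps G R) = cyc (steps G ys)"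
  proof (cases "steps G ys = []")
    case True
    then show ?thesis using k(2) steps_rep[of G k ys] by simp
  next
    case False
    then show ?thesis using k(1,2) steps_rep cyc_rep by metis
  qed
  ultimately show ?thesis by simp
qed

lemma CPC_elim:
  assumes G: "abstract_assembly_graph G" and c: "c \<in> CPC G"
  shows "\<exists>v ws. is_walk G v ws \<and> ws \<noteq> [] \<and> walk_end G v ws = v \<and> c = cyc (steps G ws)"
proof -
  obtain v es where "c = cyc (drop (length (vlab G v)) (walk_label G v es))"
    "is_walk G v es" "es \<noteq> []" "walk_end G v es = v"
    using c unfolding CPC_def by blast
  then show ?thesis using walk_label_steps[OF G] by fastforce
qed

lemma suffix_walk_len:
  assumes G: "abstract_assembly_graph G" and w: "is_walk G v es" and s: "\<forall>e\<in>set es. step G e = []"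
  shows "length (vlab G (walk_end G v es)) \<le> length (vlab G v)"
  using w s
proof (induction es arbitrary: v)
  case Nil then show ?case by simp
next
  case (Cons e es)
  have e: "e \<in> arcs G" "tail G e = v" using Cons.prems by auto
  have "length (vlab G (head G e)) \<le> length (elab G e)"
    using G e unfolding abstract_assembly_graph_def by (auto dest: suffix_length_le)
  moreover have "elab G e = vlab G v" using elab_split[OF G e(1)] Cons.prems e by simp
  moreover have "length (vlab G (walk_end G (head G e) es)) \<le> length (vlab G (head G e))"
    using Cons by auto
  ultimately show ?case by simp
qed

lemma closed_steps_nonempty:
  assumes G: "assembly_graph G" and w: "is_walk G v es" "es \<noteq> []" "walk_end G v es = v"
  shows "steps G es \<noteq> []"
proof
  assume st: "steps G es = []"
  have AG: "abstract_assembly_graph G" using G unfolding assembly_graph_def by blast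
  obtain e es' where es: "es = e # es'" using w(2) by (cases es) auto
  have e: "e \<in> arcs G" "tail G e = v" using w(1) es by auto
  have se: "step G e = []" and ss: "\<forall>e\<in>set es'. step G e = []"
    using st es by (auto simp: steps_def)
  have el: "elab G e = vlab G v" using elab_split[OF AG e(1)] se e by simp
  have "length (vlab G (walk_end G (head G e) es')) \<le> length (vlab G (head G e))"
    using suffix_walk_len[OF AG _ ss] w(1) es by auto
  hence l1: "length (vlab G v) \<le> length (vlab G (head G e))" using w(3) es by simp
  have suf: "suffix (vlab G (head G e)) (elab G e)"
    using AG e unfolding abstract_assembly_graph_def by auto
  hence "length (vlab G (head G e)) \<le> length (elab G e)" by (rule suffix_length_le)
  hence "vlab G (head G e) = elab G e" using suf l1 el
    by (metis le_antisym suffix_length_suffix suffix_order.antisym suffix_order.refl)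
  hence "prefix_edge G e \<and> suffix_edge G e" unfolding prefix_edge_def suffix_edge_def using el e by simp
  thus False using G e unfolding assembly_graph_def by blast
qed


definition pre :: "('v, 'e, 'a) agraph \<Rightarrow> 'e \<Rightarrow> 'a list" where
  "pre G e = take (length (elab G e) - length (vlab G (head G e))) (elab G e)"

lemma elab_split2:
  assumes "abstract_assembly_graph G" "e \<in> arcs G"
  shows "elab G e = pre G e @ vlab G (head G e)"
proof -
  have "suffix (vlab G (head G e)) (elab G e)" using assms unfolding abstract_assembly_graph_def by auto
  then obtain Z where "elab G e = Z @ vlab G (head G e)" by (auto simp: suffix_def)
  thus ?thesis unfolding pre_def by simp
qed

definition frame :: "('v, 'e, 'a) agraph \<Rightarrow> 'a list \<Rightarrow> 'v \<Rightarrow> 'e list \<Rightarrow> 'e \<Rightarrow> 'e \<Rightarrow> 'a list \<Rightarrow> 'a list \<Rightarrow> bool" where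
  "frame G u y ps e f \<alpha> \<beta> \<longleftrightarrow> is_walk G (tail G e) (e # ps @ [f]) \<and> head G e = y \<and>
     u = \<alpha> @ vlab G y @ steps G ps @ \<beta> \<and> (\<exists>R. R \<noteq> [] \<and> pre G e = R @ \<alpha>) \<and>
     (\<exists>T. T \<noteq> [] \<and> step G f = \<beta> @ T)"

lemma frame_walk:
  assumes "frame G u y ps e f \<alpha> \<beta>"
  shows "is_walk G y ps" "e \<in> arcs G" "f \<in> arcs G" "is_walk G y (ps @ [f])" "is_walk G (tail G e) (e # ps)"
  using assms unfolding frame_def
  by (auto simp: is_walk_append[of G _ "e # ps" "[f]", simplified] is_walk_append)

lemma inner_len:
  assumes "inner_subwalk G pv pes qv qes"
  shows "length pes + 2 \<le> length qes"
proof -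
  obtain as bs where "as \<noteq> []" "bs \<noteq> []" "qes = as @ pes @ bs"
    using assms unfolding inner_subwalk_def by blast
  thus ?thesis by (cases as; cases bs) auto
qed

lemma frame_unique:
  assumes G: "abstract_assembly_graph G" and NR: "non_redundant G"
    and F: "frame G u y ps e f \<alpha> \<beta>"
    and u': "u = \<alpha>' @ vlab G y @ steps G ps @ \<beta>'"
  shows "\<alpha>' = \<alpha>"
proof -
  define P where "P = vlab G y @ steps G ps"
  have u: "u = \<alpha> @ P @ \<beta>" and u2: "u = \<alpha>' @ P @ \<beta>'" using F u' unfolding frame_def P_def by auto
  obtain R where R: "R \<noteq> []" "pre G e = R @ \<alpha>" using F unfolding frame_def by blast
  obtain T where T: "T \<noteq> []" "step G f = \<beta> @ T" using F unfolding frame_def by blast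
  have wps: "is_walk G y ps" and wpsf: "is_walk G y (ps @ [f])" and wep: "is_walk G (tail G e) (e # ps)"
    and e: "e \<in> arcs G" and he: "head G e = y"
    using frame_walk[OF F] F unfolding frame_def by auto
  have lab_pf: "walk_label G y (ps @ [f]) = P @ step G f"
    using walk_label_steps[OF G wpsf] unfolding P_def by simp
  have lab_ep: "walk_label G (tail G e) (e # ps) = pre G e @ P"
    using walk_label_steps[OF G wep] elab_split[OF G e] elab_split2[OF G e] he unfolding P_def
    by (metis append.assoc steps_Cons)
  have not_gt: "\<not> length \<alpha> < length \<alpha>'"
  proof
    assume lt: "length \<alpha> < length \<alpha>'"
    have "prefix \<alpha> \<alpha>'" using u u2 lt
      by (metis append_eq_append_conv_if append_eq_conv_conj prefix_def take_is_prefix less_imp_le_nat)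
    then obtain D where D: "\<alpha>' = \<alpha> @ D" by (auto simp: prefix_def)
    have Dne: "D \<noteq> []" using D lt by auto
    have "P @ \<beta> = D @ P @ \<beta>'" using u u2 D by simp
    hence "walk_label G y (ps @ [f]) = D @ P @ (\<beta>' @ T)" using lab_pf T by simp
    hence "proper_infix P (walk_label G y (ps @ [f]))" unfolding proper_infix_def using Dne T(1) by blast
    hence "proper_infix (walk_label G y ps) (walk_label G y (ps @ [f]))"
      using walk_label_steps[OF G wps] unfolding P_def by simp
    hence "inner_subwalk G y ps y (ps @ [f])"
      using NR wps wpsf unfolding non_redundant_def by blast
    thus False using inner_len by fastforce
  qed
  have not_lt: "\<not> length \<alpha>' < length \<alpha>"
  proof
    assume lt: "length \<alpha>' < length \<alpha>"
    have "prefix \<alpha>' \<alpha>" using u u2 lt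
      by (metis append_eq_append_conv_if append_eq_conv_conj prefix_def take_is_prefix less_imp_le_nat)
    then obtain D where D: "\<alpha> = \<alpha>' @ D" by (auto simp: prefix_def)
    have Dne: "D \<noteq> []" using D lt by auto
    have eq: "D @ P @ \<beta> = P @ \<beta>'" using u u2 D by simp
    have "prefix P (D @ P)"
    proof -
      have "prefix P (D @ P @ \<beta>)" using eq by simp
      moreover have "prefix (D @ P) (D @ P @ \<beta>)" by simp
      moreover have "length P \<le> length (D @ P)" by simp
      ultimately show ?thesis using prefix_length_prefix by blast
    qed
    then obtain E where E: "D @ P = P @ E" by (auto simp: prefix_def)
    have Ene: "E \<noteq> []" using E Dne by (metis append_Nil2 append_self_conv2 length_append add_left_cancel length_0_conv add.commute)
    have "walk_label G (tail G e) (e # ps) = (R @ \<alpha>') @ P @ E" using lab_ep R D E by simp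
    hence "proper_infix P (walk_label G (tail G e) (e # ps))" unfolding proper_infix_def using R(1) Ene by blast
    hence "proper_infix (walk_label G y ps) (walk_label G (tail G e) (e # ps))"
      using walk_label_steps[OF G wps] unfolding P_def by simp
    hence "inner_subwalk G y ps (tail G e) (e # ps)"
      using NR wps wep unfolding non_redundant_def by blast
    thus False using inner_len by fastforce
  qed
  have "length \<alpha>' = length \<alpha>" using not_gt not_lt by simp
  thus ?thesis using u u2 by (metis append_eq_append_conv)
qed

lemma frame_rigid_half:
  assumes G: "abstract_assembly_graph G" and NR: "non_redundant G"
    and F1: "frame G u y1 ps1 e1 f1 \<alpha>1 \<beta>1" and F2: "frame G u y2 ps2 e2 f2 \<alpha>2 \<beta>2"
  shows "length ps1 \<le> length ps2 \<and> (length ps1 = length ps2 \<longrightarrow> y1 = y2 \<and> ps1 = ps2)"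
proof -
  obtain R where R: "R \<noteq> []" "pre G e2 = R @ \<alpha>2" using F2 unfolding frame_def by blast
  obtain T where T: "T \<noteq> []" "step G f2 = \<beta>2 @ T" using F2 unfolding frame_def by blast
  have w2: "is_walk G (tail G e2) (e2 # ps2 @ [f2])" and he: "head G e2 = y2"
    and e2: "e2 \<in> arcs G" using F2 frame_walk[OF F2] unfolding frame_def by auto
  have w1: "is_walk G y1 ps1" using frame_walk[OF F1] by simp
  have "walk_label G (tail G e2) (e2 # ps2 @ [f2]) = pre G e2 @ vlab G y2 @ steps G ps2 @ step G f2"
    using walk_label_steps[OF G w2] elab_split[OF G e2] elab_split2[OF G e2] he
    by (metis append.assoc steps_Cons steps_append steps_Nil append_Nil2)
  also have "\<dots> = R @ u @ T" using R T F2 unfolding frame_def by simp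
  also have "\<dots> = (R @ \<alpha>1) @ (vlab G y1 @ steps G ps1) @ (\<beta>1 @ T)" using F1 unfolding frame_def by simp
  finally have "proper_infix (walk_label G y1 ps1) (walk_label G (tail G e2) (e2 # ps2 @ [f2]))"
    unfolding proper_infix_def walk_label_steps[OF G w1] using R(1) T(1) by blast
  hence "inner_subwalk G y1 ps1 (tail G e2) (e2 # ps2 @ [f2])"
    using NR w1 w2 unfolding non_redundant_def by blast
  then obtain as bs where ab: "as \<noteq> []" "bs \<noteq> []" "e2 # ps2 @ [f2] = as @ ps1 @ bs"
    "walk_end G (tail G e2) as = y1"
    unfolding inner_subwalk_def by blast
  have L: "Suc (length ps2) + 1 = length as + length ps1 + length bs"
    using arg_cong[OF ab(3), of length] by simp
  have L1: "length as \<ge> 1" "length bs \<ge> 1" using ab(1,2) by (auto simp: Suc_le_eq)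
  have len: "length ps1 \<le> length ps2" using L L1 by linarith
  moreover have "length ps1 = length ps2 \<longrightarrow> y1 = y2 \<and> ps1 = ps2"
  proof
    assume eq: "length ps1 = length ps2"
    have "length as = 1" "length bs = 1" using L L1 eq by linarith+
    then obtain a b where "as = [a]" "bs = [b]" by (metis One_nat_def length_0_conv length_Suc_conv)
    thus "y1 = y2 \<and> ps1 = ps2" using ab he by auto
  qed
  ultimately show ?thesis by blast
qed

lemma frame_rigid:
  assumes G: "abstract_assembly_graph G" and NR: "non_redundant G"
    and F1: "frame G u y1 ps1 e1 f1 \<alpha>1 \<beta>1" and F2: "frame G u y2 ps2 e2 f2 \<alpha>2 \<beta>2"
  shows "y1 = y2 \<and> ps1 = ps2 \<and> \<alpha>1 = \<alpha>2"
proof -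
  have "y1 = y2 \<and> ps1 = ps2"
    using frame_rigid_half[OF G NR F1 F2] frame_rigid_half[OF G NR F2 F1] by simp
  moreover have "\<alpha>1 = \<alpha>2"
    using frame_unique[OF G NR F2, of \<alpha>1 \<beta>1] F1 calculation unfolding frame_def by simp
  ultimately show ?thesis by simp
qed


lemma nat_ivt1:
  fixes f :: "nat \<Rightarrow> nat"
  shows "f 0 < c \<Longrightarrow> c \<le> f n \<Longrightarrow> \<exists>k<n. f k < c \<and> c \<le> f (Suc k)"
proof (induction n)
  case 0 then show ?case by simp
next
  case (Suc n)
  show ?case
  proof (cases "c \<le> f n")
    case True then show ?thesis using Suc by (meson less_Suc_eq)
  next
    case False then show ?thesis using Suc.prems by auto
  qed
qed

lemma nat_ivt2:
  fixes f :: "nat \<Rightarrow> nat"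
  shows "f a \<le> c \<Longrightarrow> c < f n \<Longrightarrow> a \<le> n \<Longrightarrow> \<exists>k. a \<le> k \<and> k < n \<and> f k \<le> c \<and> c < f (Suc k)"
proof (induction n)
  case 0 then show ?case by simp
next
  case (Suc n)
  show ?case
  proof (cases "c < f n")
    case True
    hence "a \<noteq> Suc n" using Suc.prems(1,2) by auto
    hence "a \<le> n" using Suc.prems(3) by simp
    then show ?thesis using Suc True by (meson less_Suc_eq)
  next
    case False
    have "a \<noteq> Suc n" using Suc.prems(1,2) by auto
    hence "a \<le> n" using Suc.prems(3) by simp
    then show ?thesis using Suc.prems False by (intro exI[of _ n]) auto
  qed
qed

lemma take_walk: "is_walk G x es \<Longrightarrow> is_walk G x (take k es)"
  using is_walk_append[of G x "take k es" "drop k es"] by simp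

lemma take_le_split: "i \<le> j \<Longrightarrow> take j es = take i es @ drop i (take j es)"
  by (metis append_take_drop_id min.absorb1 take_take)

lemma frame_exists:
  assumes G: "abstract_assembly_graph G"
    and w: "is_walk G x es"
    and lab: "vlab G x @ steps G es = \<gamma> @ u @ \<eta>"
    and g: "\<gamma> \<noteq> []" and h: "\<eta> \<noteq> []"
    and LE: "\<forall>e\<in>arcs G. length (elab G e) \<le> L" and LV: "\<forall>v\<in>verts G. length (vlab G v) \<le> L"
    and lu: "2 * L \<le> length u"
  shows "\<exists>k y ps e f \<alpha> \<beta>. k \<le> length es \<and> walk_end G x (take k es) = y \<and>
           length (vlab G x @ steps G (take k es)) = length \<gamma> + length \<alpha> + length (vlab G y) \<and>
           frame G u y ps e f \<alpha> \<beta>"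
proof -
  define pos where "pos k = length (vlab G x @ steps G (take k es))" for k
  define lv where "lv k = length (vlab G (walk_end G x (take k es)))" for k
  define st where "st k = pos k - lv k" for k
  have W: "is_walk G x (take k es)" for k using take_walk[OF w] .
  have sufk: "\<exists>X. vlab G x @ steps G (take k es) = X @ vlab G (walk_end G x (take k es)) \<and> length X = st k" for k
  proof -
    obtain X where "vlab G x @ steps G (take k es) = X @ vlab G (walk_end G x (take k es))"
      using walk_suffix[OF G W[of k]] by (auto simp: suffix_def)
    moreover have "length X = st k" using calculation unfolding st_def pos_def lv_def
      by (metis add_diff_cancel_right' length_append)
    ultimately show ?thesis by blast
  qed
  have lvpos: "lv k \<le> pos k" for k
    using sufk[of k] unfolding st_def pos_def lv_def by (metis le_add2 length_append)
  have stepk: "tail G (es ! k) = walk_end G x (take k es) \<and> es ! k \<in> arcs G \<and>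
      walk_end G x (take (Suc k) es) = head G (es ! k) \<and> take (Suc k) es = take k es @ [es ! k]"
    if "k < length es" for k
  proof -
    have t: "take (Suc k) es = take k es @ [es ! k]" using that by (simp add: take_Suc_conv_app_nth)
    have "is_walk G (walk_end G x (take k es)) [es ! k]" using W[of "Suc k"] t is_walk_append by metis
    thus ?thesis using t walk_end_append[of G x "take k es" "[es ! k]"] by auto
  qed
  have pos_Suc: "pos (Suc k) = pos k + length (step G (es ! k))" if "k < length es" for k
    using stepk[OF that] unfolding pos_def by simp
  have st_Suc: "st (Suc k) = st k + length (pre G (es ! k))" if "k < length es" for k
  proof -
    have e: "es ! k \<in> arcs G" using stepk[OF that] by simp
    have a1: "length (elab G (es ! k)) = lv k + length (step G (es ! k))"
      using elab_split[OF G e] stepk[OF that] unfolding lv_def by simp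
    have a2: "length (elab G (es ! k)) = length (pre G (es ! k)) + lv (Suc k)"
      using elab_split2[OF G e] stepk[OF that] unfolding lv_def by (metis length_append)
    show ?thesis unfolding st_def using pos_Suc[OF that] a1 a2 lvpos[of k] by linarith
  qed
  have pos_mono: "pos i \<le> pos j" if "i \<le> j" for i j
    using take_le_split[OF that, of es] unfolding pos_def by (metis steps_append append.assoc length_append le_add1)
  have st0: "st 0 = 0" unfolding st_def pos_def lv_def by simp
  have lenlab: "pos (length es) = length \<gamma> + length u + length \<eta>" unfolding pos_def using lab by simp
  have lvL: "lv k \<le> L" for k using LV walk_end_verts[OF W[of k]] unfolding lv_def by blast
  have "L \<le> length u" using lu by linarith
  hence stn: "length \<gamma> \<le> st (length es)" unfolding st_def using lenlab lvL[of "length es"] by linarith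
  obtain k0 where k0: "k0 < length es" "st k0 < length \<gamma>" "length \<gamma> \<le> st (Suc k0)"
    using nat_ivt1[of st "length \<gamma>" "length es"] st0 stn g by auto
  define k where "k = Suc k0"
  define e where "e = es ! k0"
  have e: "e \<in> arcs G" "tail G e = walk_end G x (take k0 es)" "walk_end G x (take k es) = head G e"
    "take k es = take k0 es @ [e]"
    using stepk[OF k0(1)] unfolding e_def k_def by auto
  have preL: "length (pre G e) \<le> L" using LE e(1) unfolding pre_def by fastforce
  have posk: "pos k = st k + lv k" using lvpos[of k] unfolding st_def by simp
  have "pos k < length \<gamma> + length u"
    using posk st_Suc[OF k0(1)] k0(2) preL lvL[of k] lu unfolding k_def e_def by linarith
  moreover have "length \<gamma> + length u < pos (length es)" using lenlab h by simp
  moreover have kle: "k \<le> length es" using k0(1) unfolding k_def by simp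
  ultimately obtain k' where k': "k \<le> k'" "k' < length es" "pos k' \<le> length \<gamma> + length u"
    "length \<gamma> + length u < pos (Suc k')"
    using nat_ivt2[of pos k "length \<gamma> + length u" "length es"] by auto
  define f where "f = es ! k'"
  define y where "y = head G e"
  define ps where "ps = drop k (take k' es)"
  have f: "f \<in> arcs G" "take (Suc k') es = take k' es @ [f]"
    using stepk[OF k'(2)] unfolding f_def by auto
  have tk': "take k' es = take k es @ ps" unfolding ps_def using take_le_split[OF k'(1)] .
  have tsk': "take (Suc k') es = take k0 es @ (e # ps @ [f])" using f(2) tk' e(4) by simp
  have wframe: "is_walk G (tail G e) (e # ps @ [f])"
    using W[of "Suc k'"] tsk' is_walk_append e(2) by metis
  obtain X0 where X0: "vlab G x @ steps G (take k0 es) = X0 @ vlab G (tail G e)" "length X0 = st k0"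
    using sufk[of k0] e(2) by auto
  have full: "vlab G x @ steps G es = X0 @ pre G e @ vlab G y @ steps G ps @ step G f @ steps G (drop (Suc k') es)"
  proof -
    have "vlab G x @ steps G es = vlab G x @ steps G (take (Suc k') es) @ steps G (drop (Suc k') es)"
      by (metis append_take_drop_id steps_append)
    also have "\<dots> = (vlab G x @ steps G (take k0 es)) @ step G e @ steps G ps @ step G f @ steps G (drop (Suc k') es)"
      using tsk' by simp
    also have "\<dots> = X0 @ (vlab G (tail G e) @ step G e) @ steps G ps @ step G f @ steps G (drop (Suc k') es)"
      using X0 by simp
    also have "vlab G (tail G e) @ step G e = pre G e @ vlab G y"
      using elab_split[OF G e(1)] elab_split2[OF G e(1)] unfolding y_def by simp
    finally show ?thesis by simp
  qed
  have posk_eq: "pos k = length X0 + length (pre G e) + length (vlab G y)"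
  proof -
    have "vlab G x @ steps G (take k es) = X0 @ pre G e @ vlab G y"
      using e(4) X0 elab_split[OF G e(1)] elab_split2[OF G e(1)] unfolding y_def by simp
    thus ?thesis unfolding pos_def by simp
  qed
  have posk'_eq: "pos k' = pos k + length (steps G ps)" unfolding pos_def using tk' by simp
  have posSk'_eq: "pos (Suc k') = pos k' + length (step G f)" unfolding pos_def using f(2) by simp
  have stk: "st k = length X0 + length (pre G e)" using posk_eq e(3) unfolding st_def lv_def y_def by simp
  define d where "d = length \<gamma> - length X0"
  have d: "0 < d" "d \<le> length (pre G e)" using k0 X0(2) stk unfolding d_def k_def by linarith+
  define R where "R = take d (pre G e)"
  define \<alpha> where "\<alpha> = drop d (pre G e)"
  have R: "R \<noteq> []" "pre G e = R @ \<alpha>" "length R = d" unfolding R_def \<alpha>_def using d by auto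
  have gam: "\<gamma> = X0 @ R"
  proof -
    have "take (length \<gamma>) (\<gamma> @ u @ \<eta>) = take (length \<gamma>) (X0 @ R @ \<alpha> @ vlab G y @ steps G ps @ step G f @ steps G (drop (Suc k') es))"
      using full lab R(2) by simp
    moreover have "length (X0 @ R) = length \<gamma>" using R(3) d unfolding d_def by simp
    ultimately show ?thesis by (metis append_eq_conv_conj append.assoc take_append take_all order.refl)
  qed
  have ueta: "u @ \<eta> = \<alpha> @ vlab G y @ steps G ps @ step G f @ steps G (drop (Suc k') es)"
    using full lab R(2) gam by simp
  define m where "m = length \<alpha> + length (vlab G y) + length (steps G ps)"
  have m1: "m \<le> length u" using k'(3) posk'_eq posk_eq gam R unfolding m_def by simp
  have "length u < m + length (step G f)" using k'(4) posSk'_eq posk'_eq posk_eq gam R unfolding m_def by simp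
  hence m2: "length u - m < length (step G f)" using m1 by linarith
  define \<beta> where "\<beta> = take (length u - m) (step G f)"
  define T where "T = drop (length u - m) (step G f)"
  have T: "T \<noteq> []" "step G f = \<beta> @ T" unfolding T_def \<beta>_def using m2 by auto
  have uu: "u = \<alpha> @ vlab G y @ steps G ps @ \<beta>"
  proof -
    have "u = take (length u) (u @ \<eta>)" by simp
    also have "\<dots> = take (length u) (\<alpha> @ vlab G y @ steps G ps @ step G f @ steps G (drop (Suc k') es))"
      using ueta by simp
    also have "\<dots> = \<alpha> @ vlab G y @ steps G ps @ take (length u - m) (step G f @ steps G (drop (Suc k') es))"
      using m1 unfolding m_def by (simp add: take_append)
    also have "take (length u - m) (step G f @ steps G (drop (Suc k') es)) = \<beta>"
      unfolding \<beta>_def using m2 by simp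
    finally show ?thesis .
  qed
  have fr: "frame G u y ps e f \<alpha> \<beta>"
    unfolding frame_def using wframe uu R T unfolding y_def by blast
  have "length (vlab G x @ steps G (take k es)) = length \<gamma> + length \<alpha> + length (vlab G y)"
    using posk_eq gam R unfolding pos_def by simp
  thus ?thesis using fr kle e(3) unfolding y_def by blast
qed


lemma pos_mono_walk: "i \<le> j \<Longrightarrow> length (vlab G x @ steps G (take i es)) \<le> length (vlab G x @ steps G (take j es))"
  using take_le_split[of i j es] by (metis steps_append append.assoc length_append le_add1)

lemma cut_closed:
  assumes G: "abstract_assembly_graph G" and w: "is_walk G x es"
    and k: "walk_end G x (take k1 es) = y" "walk_end G x (take k2 es) = y"
    and p: "length (vlab G x @ steps G (take k1 es)) = p1" "length (vlab G x @ steps G (take k2 es)) = p2"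
    and lt: "p1 < p2"
  shows "\<exists>R. is_walk G y R \<and> R \<noteq> [] \<and> walk_end G y R = y \<and>
           steps G R = take (p2 - p1) (drop p1 (vlab G x @ steps G es))"
proof -
  have k12: "k1 < k2"
  proof (rule ccontr)
    assume "\<not> k1 < k2"
    hence "p2 \<le> p1" using pos_mono_walk[of k2 k1 G x es] p by simp
    thus False using lt by simp
  qed
  define R where "R = drop k1 (take k2 es)"
  have t2: "take k2 es = take k1 es @ R" unfolding R_def using take_le_split[of k1 k2 es] k12 by simp
  have "is_walk G x (take k2 es)" using take_walk[OF w] .
  hence wR: "is_walk G y R" using t2 is_walk_append k(1) by metis
  have eR: "walk_end G y R = y" using t2 k walk_end_append by metis
  have lab2: "vlab G x @ steps G (take k2 es) = (vlab G x @ steps G (take k1 es)) @ steps G R"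
    using t2 by simp
  have Rne: "R \<noteq> []" using lab2 p lt by auto
  have pre2: "prefix (vlab G x @ steps G (take k2 es)) (vlab G x @ steps G es)"
    by (metis append_take_drop_id steps_append append.assoc prefixI)
  have "steps G R = drop p1 (vlab G x @ steps G (take k2 es))" using lab2 p by simp
  also have "\<dots> = drop p1 (take p2 (vlab G x @ steps G es))"
    using pre2 p(2) by (metis prefix_def append_eq_conv_conj)
  also have "\<dots> = take (p2 - p1) (drop p1 (vlab G x @ steps G es))" by (rule drop_take)
  finally show ?thesis using wR Rne eR by blast
qed

lemma piece:
  assumes va: "v @ a = a1 @ v" and t: "t \<le> length v"
  shows "drop t v @ a = take (length a) (drop t v @ a) @ drop t v"
proof -
  define u where "u = drop t v"
  have "suffix u (u @ a)"
  proof -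
    have "u @ a = drop t (v @ a)" unfolding u_def using t by simp
    also have "\<dots> = drop t (a1 @ v)" using va by simp
    finally have ua: "u @ a = drop t (a1 @ v)" .
    have "suffix u v" unfolding u_def by (simp add: suffix_drop)
    hence "suffix u (a1 @ v)" by (meson suffix_appendI suffix_order.refl)
    moreover have "suffix (drop t (a1 @ v)) (a1 @ v)" by (rule suffix_drop)
    moreover have "length u \<le> length (drop t (a1 @ v))" using ua[symmetric] by simp
    ultimately have "suffix u (drop t (a1 @ v))" by (rule suffix_length_suffix)
    thus ?thesis using ua by simp
  qed
  then obtain Z where Z: "u @ a = Z @ u" by (auto simp: suffix_def)
  hence "length Z = length a" by (metis add_right_cancel length_append add.commute)
  hence "Z = take (length a) (u @ a)" using Z by simp
  thus ?thesis using Z unfolding u_def by simp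
qed

lemma unroll:
  assumes G: "assembly_graph G" and w: "is_walk G x ws" "ws \<noteq> []" "walk_end G x ws = x"
    and cy: "cyc (steps G ws) = cyc w" and wne: "w \<noteq> []"
    and S: "win (per w) p (length S) = S"
  shows "\<exists>m \<gamma> \<eta>. \<gamma> \<noteq> [] \<and> \<eta> \<noteq> [] \<and> is_walk G x (concat (replicate m ws)) \<and>
           vlab G x @ steps G (concat (replicate m ws)) = \<gamma> @ S @ \<eta>"
proof -
  define z where "z = steps G ws"
  have zne: "z \<noteq> []" unfolding z_def using closed_steps_nonempty[OF G w] .
  have "per w \<in> cyc z" using cy cyc_eq[of w] unfolding z_def
    by (metis rangeI shift_0)
  then obtain k0 where k0: "per w = shift k0 (per z)" using cyc_eq[of z] by auto
  define q where "q = p + k0"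
  have S1: "win (per z) q (length S) = S" using S k0 win_shift unfolding q_def by metis
  define j where "j = nat (\<bar>q\<bar> + 1)"
  have lz: "int (length z) \<ge> 1" using zne by (simp add: Suc_le_eq)
  have "int j * int (length z) \<ge> int j" using lz by (simp add: mult_le_cancel_left1)
  hence qj: "q + int (length z) * int j \<ge> 1" unfolding j_def by (simp add: algebra_simps)
  define q' where "q' = nat (q + int (length z) * int j)"
  have S2: "win (per z) (int q') (length S) = S"
    using S1 win_periodic_shift[OF per_periodic[OF zne], of q "int j" "length S"] qj unfolding q'_def by simp
  have q'1: "q' \<ge> 1" using qj unfolding q'_def by linarith
  define m where "m = q' + length S + 1"
  have "m * 1 \<le> m * length z" using zne by (intro mult_le_mono2) (simp add: Suc_le_eq)
  hence mz: "m * length z \<ge> q' + length S + 1" unfolding m_def by simp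
  define r where "r = m * length z - q' - length S"
  have r1: "r \<ge> 1" unfolding r_def using mz by linarith
  have "concat (replicate m z) = win (per z) 0 (q' + length S + r)"
    using win_per_rep[OF zne, of m] mz unfolding r_def by simp
  also have "\<dots> = win (per z) 0 q' @ S @ win (per z) (int q' + int (length S)) r"
    using win_add S2 by (metis add.assoc add_0)
  finally have cz: "concat (replicate m z) = win (per z) 0 q' @ S @ win (per z) (int q' + int (length S)) r" .
  have "is_walk G x (concat (replicate m ws))" using closed_rep[OF w(1) w(3)] by blast
  moreover have "vlab G x @ steps G (concat (replicate m ws)) =
      (vlab G x @ win (per z) 0 q') @ S @ win (per z) (int q' + int (length S)) r"
    using cz steps_rep[of G m ws] unfolding z_def by simp
  moreover have "vlab G x @ win (per z) 0 q' \<noteq> []"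
    using q'1 by (metis Nil_is_append_conv length_win list.size(3) not_one_le_zero)
  moreover have "win (per z) (int q' + int (length S)) r \<noteq> []"
    using r1 by (metis length_win list.size(3) not_one_le_zero)
  ultimately show ?thesis by blast
qed


lemma conj_piece:
  assumes "v @ a = a1 @ v" "t \<le> length v" "a \<noteq> []"
  shows "cyc (take (length a) (drop t v @ a)) = cyc a"
  using piece[OF assms(1,2)] cyc_conj assms(3) by metis

lemma conj_piece2:
  assumes "v @ a = a1 @ v" "v @ b = b1 @ v" "t \<le> length v" "a \<noteq> []" "b \<noteq> []"
  shows "cyc (take (length a) (drop t v @ a) @ take (length b) (drop t v @ b)) = cyc (a @ b)"
proof -
  define u where "u = drop t v"
  have ua: "u @ a = take (length a) (u @ a) @ u" using piece[OF assms(1,3)] unfolding u_def .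
  have ub: "u @ b = take (length b) (u @ b) @ u" using piece[OF assms(2,3)] unfolding u_def .
  have "u @ (a @ b) = (take (length a) (u @ a) @ take (length b) (u @ b)) @ u"
    using ua ub by (metis append.assoc)
  thus ?thesis using cyc_conj assms(4) unfolding u_def by blast
qed

lemma frame_t: "frame G v y ps e f \<alpha> \<beta> \<Longrightarrow> length \<alpha> + length (vlab G y) \<le> length v"
  unfolding frame_def by auto

lemma loop_at_frame:
  assumes AG: "abstract_assembly_graph G" and NR: "non_redundant G"
    and LE: "\<forall>e\<in>arcs G. length (elab G e) \<le> L" and LV: "\<forall>v\<in>verts G. length (vlab G v) \<le> L"
    and lv: "2 * L \<le> length v"
    and w: "is_walk G x es" and lab: "vlab G x @ steps G es = \<gamma> @ v @ a @ \<eta>"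
    and g: "\<gamma> \<noteq> []" and h: "\<eta> \<noteq> []" and va: "v @ a = a1 @ v" and ane: "a \<noteq> []"
  shows "\<exists>y ps e f \<alpha> \<beta> R. frame G v y ps e f \<alpha> \<beta> \<and> is_walk G y R \<and> R \<noteq> [] \<and> walk_end G y R = y \<and>
           steps G R = take (length a) (drop (length \<alpha> + length (vlab G y)) v @ a)"
proof -
  have la1: "length a1 = length a" using va by (metis add_left_cancel length_append add.commute)
  have lab2: "vlab G x @ steps G es = (\<gamma> @ a1) @ v @ \<eta>" using lab va by (metis append.assoc)
  obtain k1 y1 ps1 e1 f1 \<alpha>1 \<beta>1 where F1: "k1 \<le> length es" "walk_end G x (take k1 es) = y1"
    "length (vlab G x @ steps G (take k1 es)) = length \<gamma> + length \<alpha>1 + length (vlab G y1)"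
    "frame G v y1 ps1 e1 f1 \<alpha>1 \<beta>1"
    using frame_exists[OF AG w lab g _ LE LV lv] h by blast
  obtain k2 y2 ps2 e2 f2 \<alpha>2 \<beta>2 where F2: "k2 \<le> length es" "walk_end G x (take k2 es) = y2"
    "length (vlab G x @ steps G (take k2 es)) = length (\<gamma> @ a1) + length \<alpha>2 + length (vlab G y2)"
    "frame G v y2 ps2 e2 f2 \<alpha>2 \<beta>2"
    using frame_exists[OF AG w lab2 _ h LE LV lv] g by blast
  have eq: "y2 = y1" "\<alpha>2 = \<alpha>1" using frame_rigid[OF AG NR F1(4) F2(4)] by auto
  define t where "t = length \<alpha>1 + length (vlab G y1)"
  have tv: "t \<le> length v" using frame_t[OF F1(4)] unfolding t_def .
  obtain R where R: "is_walk G y1 R" "R \<noteq> []" "walk_end G y1 R = y1"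
    "steps G R = take ((length \<gamma> + length a + t) - (length \<gamma> + t)) (drop (length \<gamma> + t) (vlab G x @ steps G es))"
    using cut_closed[OF AG w F1(2) F2(2)[unfolded eq] F1(3) F2(3)[unfolded eq]] ane la1 unfolding t_def
    by (auto simp: algebra_simps)
  have "drop (length \<gamma> + t) (vlab G x @ steps G es) = drop t v @ a @ \<eta>" using lab tv by simp
  hence "steps G R = take (length a) (drop t v @ a)" using R(4) by simp
  thus ?thesis using F1(4) R unfolding t_def by blast
qed

lemma Max_bound:
  assumes "finite A" "x \<in> A"
  shows "x \<le> Max (insert (0::nat) A)"
  using assms by simp

theorem graph_conducting:
  assumes G: "assembly_graph G" and NR: "non_redundant G" and fin: "finite_graph G"
  shows "finitely_conducting (CPC G)"
proof -
  have AG: "abstract_assembly_graph G" using G unfolding assembly_graph_def by blast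
  define L where "L = Max (insert 0 ((\<lambda>e. length (elab G e)) ` arcs G \<union> (\<lambda>v. length (vlab G v)) ` verts G))"
  have finA: "finite ((\<lambda>e. length (elab G e)) ` arcs G \<union> (\<lambda>v. length (vlab G v)) ` verts G)"
    using fin unfolding finite_graph_def by simp
  have LE: "\<forall>e\<in>arcs G. length (elab G e) \<le> L" unfolding L_def using Max_bound[OF finA] by blast
  have LV: "\<forall>v\<in>verts G. length (vlab G v) \<le> L" unfolding L_def using Max_bound[OF finA] by blast
  show ?thesis unfolding finitely_conducting_def
  proof (intro exI[of _ "2 * L"] allI impI)
    fix v :: "'c list" assume lv: "2 * L \<le> length v"
    show "conductor (CPC G) v" unfolding conductor_def
    proof (intro allI impI)
      fix a b assume ane: "a \<noteq> []" and bne: "b \<noteq> []" and sa: "suffix v (v @ a)" and sb: "suffix v (v @ b)"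
      obtain a1 where va: "v @ a = a1 @ v" using sa by (auto simp: suffix_def)
      obtain b1 where vb: "v @ b = b1 @ v" using sb by (auto simp: suffix_def)
      show "cyc (a @ b) \<in> CPC G \<longleftrightarrow> cyc a \<in> CPC G \<and> cyc b \<in> CPC G"
      proof
        assume "cyc (a @ b) \<in> CPC G"
        then obtain x ws where W: "is_walk G x ws" "ws \<noteq> []" "walk_end G x ws = x" "cyc (a @ b) = cyc (steps G ws)"
          using CPC_elim[OF AG] by blast
        have vw: "v @ (a @ b) = (a1 @ b1) @ v" using va vb by (metis append.assoc)
        obtain p where p: "win (per (a @ b)) p (length v + length (a @ b)) = v @ (a @ b)"
          using window_of_per[OF vw] ane by blast
        obtain m \<gamma> \<eta> where U: "\<gamma> \<noteq> []" "\<eta> \<noteq> []" "is_walk G x (concat (replicate m ws))"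
          "vlab G x @ steps G (concat (replicate m ws)) = \<gamma> @ (v @ (a @ b)) @ \<eta>"
          using unroll[OF G W(1,2,3) W(4)[symmetric], of p "v @ (a @ b)"] p ane by auto
        have l1: "vlab G x @ steps G (concat (replicate m ws)) = \<gamma> @ v @ a @ (b @ \<eta>)" using U(4) by simp
        have l2: "vlab G x @ steps G (concat (replicate m ws)) = (\<gamma> @ a1) @ v @ b @ \<eta>" using U(4) va
          by (metis append.assoc)
        obtain y ps e f \<alpha> \<beta> R where A: "frame G v y ps e f \<alpha> \<beta>" "is_walk G y R" "R \<noteq> []" "walk_end G y R = y"
          "steps G R = take (length a) (drop (length \<alpha> + length (vlab G y)) v @ a)"
          using loop_at_frame[OF AG NR LE LV lv U(3) l1 U(1) _ va ane] U(2) by blast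
        obtain y' ps' e' f' \<alpha>' \<beta>' R' where B: "frame G v y' ps' e' f' \<alpha>' \<beta>'" "is_walk G y' R'" "R' \<noteq> []" "walk_end G y' R' = y'"
          "steps G R' = take (length b) (drop (length \<alpha>' + length (vlab G y')) v @ b)"
          using loop_at_frame[OF AG NR LE LV lv U(3) l2 _ U(2) vb bne] U(1) by blast
        have "cyc a \<in> CPC G" using CPC_closed[OF AG A(2,3,4)] A(5) conj_piece[OF va frame_t[OF A(1)] ane] by simp
        moreover have "cyc b \<in> CPC G" using CPC_closed[OF AG B(2,3,4)] B(5) conj_piece[OF vb frame_t[OF B(1)] bne] by simp
        ultimately show "cyc a \<in> CPC G \<and> cyc b \<in> CPC G" by blast
      next
        assume "cyc a \<in> CPC G \<and> cyc b \<in> CPC G"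
        then obtain xa wsa xb wsb where
          Wa: "is_walk G xa wsa" "wsa \<noteq> []" "walk_end G xa wsa = xa" "cyc a = cyc (steps G wsa)" and
          Wb: "is_walk G xb wsb" "wsb \<noteq> []" "walk_end G xb wsb = xb" "cyc b = cyc (steps G wsb)"
          using CPC_elim[OF AG] by meson
        obtain pa where pa: "win (per a) pa (length v + length a) = v @ a"
          using window_of_per[OF va ane] by blast
        obtain pb where pb: "win (per b) pb (length v + length b) = v @ b"
          using window_of_per[OF vb bne] by blast
        obtain ma \<gamma>a \<eta>a where Ua: "\<gamma>a \<noteq> []" "\<eta>a \<noteq> []" "is_walk G xa (concat (replicate ma wsa))"
          "vlab G xa @ steps G (concat (replicate ma wsa)) = \<gamma>a @ (v @ a) @ \<eta>a"
          using unroll[OF G Wa(1,2,3) Wa(4)[symmetric], of pa "v @ a"] pa ane by auto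
        obtain mb \<gamma>b \<eta>b where Ub: "\<gamma>b \<noteq> []" "\<eta>b \<noteq> []" "is_walk G xb (concat (replicate mb wsb))"
          "vlab G xb @ steps G (concat (replicate mb wsb)) = \<gamma>b @ (v @ b) @ \<eta>b"
          using unroll[OF G Wb(1,2,3) Wb(4)[symmetric], of pb "v @ b"] pb bne by auto
        obtain y ps e f \<alpha> \<beta> R where A: "frame G v y ps e f \<alpha> \<beta>" "is_walk G y R" "R \<noteq> []" "walk_end G y R = y"
          "steps G R = take (length a) (drop (length \<alpha> + length (vlab G y)) v @ a)"
          using loop_at_frame[OF AG NR LE LV lv Ua(3) _ Ua(1,2) va ane] Ua(4) by auto
        obtain y' ps' e' f' \<alpha>' \<beta>' R' where B: "frame G v y' ps' e' f' \<alpha>' \<beta>'" "is_walk G y' R'" "R' \<noteq> []" "walk_end G y' R' = y'"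
          "steps G R' = take (length b) (drop (length \<alpha>' + length (vlab G y')) v @ b)"
          using loop_at_frame[OF AG NR LE LV lv Ub(3) _ Ub(1,2) vb bne] Ub(4) by auto
        have eq: "y' = y" "\<alpha>' = \<alpha>" using frame_rigid[OF AG NR A(1) B(1)] by auto
        have wR: "is_walk G y (R @ R')" using A(2,4) B(2) eq is_walk_append by metis
        have eR: "walk_end G y (R @ R') = y" using A(4) B(4) eq walk_end_append by metis
        have "cyc (steps G (R @ R')) \<in> CPC G" using CPC_closed[OF AG wR _ eR] A(3) by simp
        moreover have "cyc (steps G (R @ R')) = cyc (a @ b)"
          using A(5) B(5) eq conj_piece2[OF va vb frame_t[OF A(1)] ane bne] by simp
        ultimately show "cyc (a @ b) \<in> CPC G" by simp
      qed
    qed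
  qed
qed


definition dbg :: "('v, 'e, 'a) agraph \<Rightarrow> nat \<Rightarrow> bool" where
  "dbg G n \<longleftrightarrow> (\<forall>e\<in>arcs G. tail G e \<in> verts G \<and> head G e \<in> verts G \<and> length (elab G e) = Suc n \<and>
        vlab G (tail G e) = take n (elab G e) \<and> vlab G (head G e) = drop 1 (elab G e)) \<and>
     (\<forall>v\<in>verts G. length (vlab G v) = n) \<and> inj_on (vlab G) (verts G) \<and> inj_on (elab G) (arcs G)"

lemma dbg_abstract: "dbg G n \<Longrightarrow> abstract_assembly_graph G"
  unfolding dbg_def abstract_assembly_graph_def by (auto simp: suffix_drop take_is_prefix)

lemma split3: "xs = take a xs @ take b (drop a xs) @ drop (a + b) xs"
proof -
  have "xs = take a xs @ drop a xs" by simp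
  also have "drop a xs = take b (drop a xs) @ drop b (drop a xs)" by (rule append_take_drop_id[symmetric])
  also have "drop b (drop a xs) = drop (a + b) xs" by (simp add: add.commute)
  finally show ?thesis .
qed

lemma walk_hd_tail: "is_walk G u es \<Longrightarrow> es \<noteq> [] \<Longrightarrow> tail G (hd es) = u"
  by (cases es) auto

lemma dbg_step:
  assumes "dbg G n" "e \<in> arcs G"
  shows "elab G e = vlab G (tail G e) @ step G e" "length (step G e) = 1"
    "elab G e = hd (elab G e) # vlab G (head G e)"
proof -
  show "elab G e = vlab G (tail G e) @ step G e" using elab_split[OF dbg_abstract[OF assms(1)] assms(2)] .
  show "length (step G e) = 1" using assms unfolding dbg_def step_def by auto
  have "elab G e \<noteq> []" using assms unfolding dbg_def by auto
  moreover have "vlab G (head G e) = drop 1 (elab G e)" using assms unfolding dbg_def by blast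
  ultimately show "elab G e = hd (elab G e) # vlab G (head G e)" by (cases "elab G e") auto
qed

lemma dbg_label_Cons:
  assumes "dbg G n" "e \<in> arcs G" "tail G e = v"
  shows "vlab G v @ steps G (e # es) = hd (elab G e) # (vlab G (head G e) @ steps G es)"
  using dbg_step[OF assms(1,2)] assms(3) by (metis append.assoc append_Cons steps_Cons)

lemma dbg_walk_label_all:
  assumes D: "dbg G n" and w: "is_walk G v es"
  shows "length (vlab G v @ steps G es) = n + length es \<and>
    (\<forall>j<length es. elab G (es ! j) = take (Suc n) (drop j (vlab G v @ steps G es))) \<and>
    (\<forall>j\<le>length es. vlab G (walk_end G v (take j es)) = take n (drop j (vlab G v @ steps G es)))"
  using w
proof (induction es arbitrary: v)
  case Nil
  then show ?case using D unfolding dbg_def by auto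
next
  case (Cons e es)
  have e: "e \<in> arcs G" "tail G e = v" "is_walk G (head G e) es" using Cons.prems by auto
  define sh where "sh = vlab G (head G e) @ steps G es"
  have lab: "vlab G v @ steps G (e # es) = hd (elab G e) # sh"
    using dbg_label_Cons[OF D e(1,2)] unfolding sh_def .
  have IH: "length sh = n + length es \<and>
    (\<forall>j<length es. elab G (es ! j) = take (Suc n) (drop j sh)) \<and>
    (\<forall>j\<le>length es. vlab G (walk_end G (head G e) (take j es)) = take n (drop j sh))"
    using Cons.IH[OF e(3)] unfolding sh_def .
  have c1: "length (vlab G v @ steps G (e # es)) = n + length (e # es)" unfolding lab using IH by simp
  have c2: "\<forall>j<length (e # es). elab G ((e # es) ! j) = take (Suc n) (drop j (vlab G v @ steps G (e # es)))"
  proof (intro allI impI)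
    fix j assume j: "j < length (e # es)"
    show "elab G ((e # es) ! j) = take (Suc n) (drop j (vlab G v @ steps G (e # es)))"
    proof (cases j)
      case 0
      have X: "vlab G v @ steps G (e # es) = elab G e @ steps G es"
        using dbg_step(1)[OF D e(1)] e(2) by simp
      have "length (elab G e) = Suc n" using D e(1) unfolding dbg_def by auto
      then show ?thesis using 0 unfolding X by simp
    next
      case (Suc j')
      then show ?thesis unfolding lab using IH j by simp
    qed
  qed
  have c3: "\<forall>j\<le>length (e # es). vlab G (walk_end G v (take j (e # es))) = take n (drop j (vlab G v @ steps G (e # es)))"
  proof (intro allI impI)
    fix j assume j: "j \<le> length (e # es)"
    show "vlab G (walk_end G v (take j (e # es))) = take n (drop j (vlab G v @ steps G (e # es)))"
    proof (cases j)
      case 0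
      have "length (vlab G v) = n" using D is_walk_verts[OF Cons.prems] unfolding dbg_def by auto
      then show ?thesis using 0 by simp
    next
      case (Suc j')
      then show ?thesis unfolding lab using IH j by simp
    qed
  qed
  show ?case using c1 c2 c3 by blast
qed

lemma dbg_walk_label:
  assumes D: "dbg G n" and w: "is_walk G v es"
  shows "length (vlab G v @ steps G es) = n + length es"
    "\<forall>j<length es. elab G (es ! j) = take (Suc n) (drop j (vlab G v @ steps G es))"
    "\<forall>j\<le>length es. vlab G (walk_end G v (take j es)) = take n (drop j (vlab G v @ steps G es))"
  using dbg_walk_label_all[OF D w] by blast+

lemma dbg_string_walk:
  assumes D: "dbg G n"
    and v: "v \<in> verts G" "vlab G v = take n s" and ls: "n \<le> length s"
    and W: "\<forall>j. j + Suc n \<le> length s \<longrightarrow> take (Suc n) (drop j s) \<in> elab G ` arcs G"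
  shows "\<exists>es. is_walk G v es \<and> vlab G v @ steps G es = s"
  using v ls W
proof (induction s arbitrary: v)
  case Nil
  then show ?case by (intro exI[of _ "[]"]) simp
next
  case (Cons c s')
  show ?case
  proof (cases "length s' < n")
    case True
    hence "take n (c # s') = c # s'" using Cons.prems(3) by simp
    then show ?thesis using Cons.prems by (intro exI[of _ "[]"]) simp
  next
    case False
    obtain e where e: "e \<in> arcs G" "elab G e = take (Suc n) (c # s')"
      using Cons.prems(4)[rule_format, of 0] False by force
    have "vlab G (tail G e) = take n (elab G e)" using D e(1) unfolding dbg_def by blast
    also have "\<dots> = take n (take (Suc n) (c # s'))" using e(2) by (simp only:)
    also have "\<dots> = take n (c # s')" unfolding take_take by (simp add: min_def)
    finally have te: "vlab G (tail G e) = vlab G v" using Cons.prems(2) by simp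
    have tv: "tail G e = v" using D te e(1) Cons.prems(1) unfolding dbg_def by (meson inj_on_def)
    have hv: "head G e \<in> verts G" "vlab G (head G e) = take n s'" using D e unfolding dbg_def by auto
    have W': "\<forall>j. j + Suc n \<le> length s' \<longrightarrow> take (Suc n) (drop j s') \<in> elab G ` arcs G"
    proof (intro allI impI)
      fix j assume "j + Suc n \<le> length s'"
      hence "Suc j + Suc n \<le> length (c # s')" by simp
      thus "take (Suc n) (drop j s') \<in> elab G ` arcs G" using Cons.prems(4) by fastforce
    qed
    obtain es where es: "is_walk G (head G e) es" "vlab G (head G e) @ steps G es = s'"
      using Cons.IH[OF hv _ W'] False by auto
    have hdc: "hd (elab G e) = c" using e(2) by simp
    have X: "vlab G v @ steps G (e # es) = hd (elab G e) # (vlab G (head G e) @ steps G es)"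
      by (rule dbg_label_Cons[OF D e(1) tv])
    have "vlab G v @ steps G (e # es) = c # s'" by (simp only: X es(2) hdc)
    moreover have "is_walk G v (e # es)" using es(1) e(1) tv Cons.prems(1) by simp
    ultimately show ?thesis by blast
  qed
qed

lemma dbg_nonredundant:
  assumes D: "dbg G n"
  shows "non_redundant G"
  unfolding non_redundant_def
proof (intro allI impI)
  fix pv pes qv qes
  assume wp: "is_walk G pv pes" and wq: "is_walk G qv qes"
    and pi: "proper_infix (walk_label G pv pes) (walk_label G qv qes)"
  have AG: "abstract_assembly_graph G" using dbg_abstract[OF D] .
  define sP where "sP = vlab G pv @ steps G pes"
  define sQ where "sQ = vlab G qv @ steps G qes"
  obtain A B where AB: "A \<noteq> []" "B \<noteq> []" "sQ = A @ sP @ B"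
    using pi unfolding proper_infix_def sP_def sQ_def walk_label_steps[OF AG wp] walk_label_steps[OF AG wq] by blast
  define i where "i = length A"
  have lP: "length sP = n + length pes" unfolding sP_def using dbg_walk_label(1)[OF D wp] .
  have lQ: "length sQ = n + length qes" unfolding sQ_def using dbg_walk_label(1)[OF D wq] .
  have i1: "i \<ge> 1" unfolding i_def using AB(1) by (cases A) auto
  have lB: "length B \<ge> 1" using AB(2) by (cases B) auto
  have lens: "length qes = i + length pes + length B" using lQ lP AB(3) unfolding i_def by simp
  define as where "as = take i qes"
  define bs where "bs = drop (i + length pes) qes"
  define mid where "mid = take (length pes) (drop i qes)"
  have dQ: "drop i sQ = sP @ B" unfolding i_def using AB(3) by simp
  have mid: "mid = pes"
  proof (rule nth_equalityI)
    show "length mid = length pes" unfolding mid_def using lens by simp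
    fix j assume "j < length mid"
    hence j: "j < length pes" unfolding mid_def using lens by simp
    have "elab G (qes ! (i + j)) = take (Suc n) (drop (i + j) sQ)"
      using dbg_walk_label(2)[OF D wq] j lens unfolding sQ_def by simp
    also have "\<dots> = take (Suc n) (drop j (sP @ B))" using dQ by (metis drop_drop add.commute)
    also have "\<dots> = take (Suc n) (drop j sP)" using lP j by simp
    also have "\<dots> = elab G (pes ! j)" using dbg_walk_label(2)[OF D wp] j unfolding sP_def by simp
    finally have "elab G (qes ! (i + j)) = elab G (pes ! j)" .
    moreover have "qes ! (i + j) \<in> arcs G" using is_walk_arcs[OF wq] j lens by (simp add: subset_iff)
    moreover have "pes ! j \<in> arcs G" using is_walk_arcs[OF wp] j by (simp add: subset_iff)
    ultimately have "qes ! (i + j) = pes ! j" using D unfolding dbg_def by (meson inj_on_def)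
    thus "mid ! j = pes ! j" unfolding mid_def using j lens by simp
  qed
  have qsplit: "qes = as @ pes @ bs" unfolding as_def bs_def using split3[of qes i "length pes"] mid
    unfolding mid_def by simp
  have was: "is_walk G qv as" unfolding as_def using take_walk[OF wq] .
  have ew: "walk_end G qv as = pv"
  proof -
    have "vlab G (walk_end G qv as) = take n (drop i sQ)"
      using dbg_walk_label(3)[OF D wq] lens unfolding as_def sQ_def by simp
    also have "\<dots> = take n sP" using dQ lP by simp
    also have "\<dots> = vlab G pv" unfolding sP_def using D is_walk_verts[OF wp] unfolding dbg_def by auto
    finally show ?thesis using D walk_end_verts[OF was] is_walk_verts[OF wp] unfolding dbg_def by (meson inj_on_def)
  qed
  have wbs: "is_walk G (walk_end G pv pes) bs"
    using wq qsplit ew is_walk_append walk_end_append by metis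
  have "as \<noteq> []" unfolding as_def using i1 lens by (cases qes) auto
  moreover have "bs \<noteq> []" unfolding bs_def using lens AB(2) by simp
  ultimately show "inner_subwalk G pv pes qv qes"
    unfolding inner_subwalk_def using qsplit was ew wp wbs by blast
qed

lemma simple_cycle:
  assumes "is_walk G v es" "es \<noteq> []" "walk_end G v es = v" "e \<in> set es"
  shows "\<exists>v' es'. directed_cycle G v' es' \<and> e \<in> set es'"
  using assms
proof (induction "length es" arbitrary: v es rule: less_induct)
  case less
  show ?case
  proof (cases "distinct (map (tail G) es)")
    case True
    then show ?thesis using less.prems unfolding directed_cycle_def by blast
  next
    case False
    then obtain xs w ys zs where d: "map (tail G) es = xs @ [w] @ ys @ [w] @ zs"
      using not_distinct_decomp by blast
    define es1 where "es1 = take (length xs) es"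
    define es2 where "es2 = take (Suc (length ys)) (drop (length xs) es)"
    define es3 where "es3 = drop (length xs + Suc (length ys)) es"
    have les: "length es = length xs + Suc (length ys) + Suc (length zs)"
      using arg_cong[OF d, of length] by simp
    have spl: "es = es1 @ es2 @ es3" unfolding es1_def es2_def es3_def by (rule split3)
    have l1: "length es1 = length xs" and l2: "length es2 = Suc (length ys)" and l3: "length es3 = Suc (length zs)"
      unfolding es1_def es2_def es3_def using les by auto
    have t2: "tail G (hd es2) = w"
    proof -
      have "map (tail G) es ! length xs = w" using d by simp
      moreover have "es ! length xs = hd es2" unfolding es2_def using les
        by (simp add: hd_drop_conv_nth hd_take)
      ultimately show ?thesis using les by simp
    qed
    have t3: "tail G (hd es3) = w"
    proof -
      have "map (tail G) es ! (length xs + Suc (length ys)) = w" using d by (simp add: nth_append)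
      moreover have "es ! (length xs + Suc (length ys)) = hd es3" unfolding es3_def using les
        by (simp add: hd_drop_conv_nth)
      ultimately show ?thesis using les by simp
    qed
    have ne2: "es2 \<noteq> []" and ne3: "es3 \<noteq> []" using l2 l3 by auto
    have w1: "is_walk G v es1" and w23: "is_walk G (walk_end G v es1) (es2 @ es3)"
      using less.prems(1) spl is_walk_append by metis+
    have w2: "is_walk G (walk_end G v es1) es2" and w3: "is_walk G (walk_end G (walk_end G v es1) es2) es3"
      using w23 is_walk_append by metis+
    have e1: "walk_end G v es1 = w" using walk_hd_tail[OF w2 ne2] t2 by simp
    have e2: "walk_end G w es2 = w" using walk_hd_tail[OF w3 ne3] t3 e1 by simp
    show ?thesis
    proof (cases "e \<in> set es2")
      case True
      have "length es2 < length es" using les l2 by simp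
      moreover have "is_walk G w es2" using w2 e1 by simp
      ultimately show ?thesis using less.hyps e2 ne2 True by blast
    next
      case False
      hence ein: "e \<in> set (es1 @ es3)" using less.prems(4) spl by auto
      have w13: "is_walk G v (es1 @ es3)" using w1 w3 e1 e2 is_walk_append by metis
      have "walk_end G v (es1 @ es3) = walk_end G v es" using spl ne3 walk_end_append walk_end_indep by metis
      hence e13: "walk_end G v (es1 @ es3) = v" using less.prems(3) by simp
      have "length (es1 @ es3) < length es" using les l1 l3 by simp
      thus ?thesis using less.hyps w13 e13 ein ne3 by blast
    qed
  qed
qed


definition Vs :: "(int \<Rightarrow> 'a) set set \<Rightarrow> nat \<Rightarrow> 'a list set" where
  "Vs C n = {win f 0 n | f. f \<in> \<Union>C}"
definition Es :: "(int \<Rightarrow> 'a) set set \<Rightarrow> nat \<Rightarrow> 'a list set" where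
  "Es C n = {win f 0 (Suc n) | f. f \<in> \<Union>C}"

lemma mem_info:
  assumes "chromosome_set C" "f \<in> c" "c \<in> C"
  shows "\<exists>x. x \<noteq> [] \<and> c = cyc x \<and> periodic f (length x) \<and> c = range (\<lambda>k. shift k f)"
proof -
  obtain x where x: "x \<noteq> []" "c = cyc x" using assms unfolding chromosome_set_def is_cyclic_def by blast
  obtain k where "f = shift k (per x)" using assms(2) x cyc_eq by auto
  hence "periodic f (length x)" using per_periodic[OF x(1)] unfolding periodic_def shift_def
    by (metis add.assoc add.commute)
  thus ?thesis using x cyc_mem assms(2) by metis
qed

lemma shift_closed:
  assumes "chromosome_set C" "f \<in> c" "c \<in> C"
  shows "shift k f \<in> c"
  using mem_info[OF assms] by auto

definition good :: "(int \<Rightarrow> 'a) set set \<Rightarrow> nat \<Rightarrow> 'a list \<Rightarrow> bool" where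
  "good C n s \<longleftrightarrow> (\<exists>r. suffix (take n s) (s @ r) \<and> drop n s @ r \<noteq> [] \<and> cyc (drop n s @ r) \<in> C)"

lemma good_E:
  assumes CS: "chromosome_set C" and e: "e \<in> Es C n"
  shows "good C n e"
proof -
  obtain f c where f: "e = win f 0 (Suc n)" "f \<in> c" "c \<in> C" using e unfolding Es_def by blast
  obtain x where x: "x \<noteq> []" "c = cyc x" "periodic f (length x)" "c = range (\<lambda>k. shift k f)"
    using mem_info[OF CS f(2,3)] by blast
  define p where "p = length x"
  have p: "p \<ge> 1" unfolding p_def using x(1) by (simp add: Suc_le_eq)
  define r where "r = win f (int (Suc n)) (p - 1)"
  have er: "e @ r = win f 0 (n + p)"
    unfolding f(1) r_def using win_add[of f 0 "Suc n" "p - 1"] p by simp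
  have "win f 0 (n + p) = win f 0 p @ win f (int p) n"
    using win_add[of f 0 p n] by (simp add: add.commute)
  also have "win f (int p) n = win f 0 n"
    using win_periodic_shift[OF x(3), of 0 1 n] unfolding p_def by simp
  finally have "suffix (win f 0 n) (e @ r)" using er by (simp add: suffix_def)
  moreover have "take n e = win f 0 n" unfolding f(1) by (simp add: take_win)
  moreover have "drop n e @ r = win f (int n) p"
  proof -
    have "drop n e @ r = drop n (e @ r)" unfolding f(1) by simp
    also have "\<dots> = win f (int n) p" using er drop_win[of n "n + p" f 0] by simp
    finally show ?thesis .
  qed
  moreover have "win f (int n) p \<noteq> []" using p by (metis length_win list.size(3) not_one_le_zero)
  moreover have "cyc (win f (int n) p) \<in> C"
    using cyc_win[OF x(3)] x(1,4) f(3) unfolding p_def by simp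
  ultimately show ?thesis unfolding good_def by metis
qed

lemma suffix_len_drop: "suffix w s \<Longrightarrow> w = drop (length s - length w) s"
  by (auto simp: suffix_def)

lemma good_extend:
  assumes cond: "\<forall>w. length w = n \<longrightarrow> conductor C w"
    and gs: "good C n s" and ls: "n \<le> length s"
    and ge: "good C n e" and le: "length e = Suc n" and te: "take n e = drop (length s - n) s"
  shows "good C n (s @ [last e])"
proof -
  define u where "u = take n s"
  define p where "p = drop n s"
  define w where "w = drop (length s - n) s"
  define c where "c = last e"
  have lw: "length w = n" unfolding w_def using ls by simp
  have lu: "length u = n" unfolding u_def using ls by simp
  have e: "e = w @ [c]"
  proof -
    have "e \<noteq> []" using le by auto
    hence "e = butlast e @ [c]" unfolding c_def by simp
    moreover have "butlast e = take n e" using le by (simp add: butlast_conv_take)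
    ultimately show ?thesis using te unfolding w_def by simp
  qed
  have de: "drop n e = [c]" using e lw by simp
  obtain r where r: "suffix u (s @ r)" "p @ r \<noteq> []" "cyc (p @ r) \<in> C"
    using gs unfolding good_def u_def p_def by blast
  obtain r' where r': "suffix w (e @ r')" "[c] @ r' \<noteq> []" "cyc ([c] @ r') \<in> C"
    using ge de te unfolding good_def w_def by auto
  obtain S0 where S0: "s = S0 @ w" unfolding w_def by (metis append_take_drop_id)
  have s: "s = u @ p" unfolding u_def p_def by simp
  have wr: "suffix u (w @ r)"
  proof -
    have "suffix u (S0 @ w @ r)" using r(1) S0 by simp
    moreover have "suffix (w @ r) (S0 @ w @ r)" by (simp add: suffix_def)
    moreover have "length u \<le> length (w @ r)" using lu lw by simp
    ultimately show ?thesis by (rule suffix_length_suffix)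
  qed
  obtain Y where Y: "s @ [c] @ r' = Y @ w"
  proof -
    obtain Y' where "w @ [c] @ r' = Y' @ w" using r'(1) e by (auto simp: suffix_def)
    hence "s @ [c] @ r' = (S0 @ Y') @ w" using S0 by simp
    thus ?thesis using that by blast
  qed
  have suf_new: "suffix u ((s @ [c]) @ r' @ r)"
  proof -
    have "(s @ [c]) @ r' @ r = Y @ w @ r" using Y by (metis append.assoc)
    thus ?thesis using wr by (metis suffix_appendI)
  qed
  have wrp: "suffix w (w @ r @ p)"
  proof -
    obtain Y2 where "w @ r = Y2 @ u" using wr by (auto simp: suffix_def)
    hence "w @ r @ p = Y2 @ s" using s by (metis append.assoc)
    thus ?thesis using S0 by (simp add: suffix_def)
  qed
  have rpne: "r @ p \<noteq> []" using r(2) by auto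
  have crp: "cyc (r @ p) \<in> C" using r(3) cyc_append_commute r(2) by metis
  have "conductor C w" using cond lw by simp
  hence "cyc (([c] @ r') @ (r @ p)) \<in> C"
    unfolding conductor_def using r' rpne crp wrp e by (metis append.assoc)
  moreover have "cyc (([c] @ r') @ (r @ p)) = cyc (p @ [c] @ r' @ r)"
    using cyc_append_commute[of "[c] @ r' @ r" p] by simp
  ultimately have C1: "cyc ((p @ [c]) @ r' @ r) \<in> C" by simp
  have tn: "take n (s @ [c]) = u" unfolding u_def using ls by simp
  have dn: "drop n (s @ [c]) = p @ [c]" unfolding p_def using ls by simp
  show ?thesis unfolding good_def c_def[symmetric] tn dn using suf_new C1 by (intro exI[of _ "r' @ r"]) auto
qed

lemma good_close:
  assumes gs: "good C n s" and ls: "n < length s" and cl: "suffix (take n s) s"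
    and cd: "conductor C (take n s)"
  shows "cyc (drop n s) \<in> C"
proof -
  define u where "u = take n s"
  define p where "p = drop n s"
  obtain r where r: "suffix u (s @ r)" "p @ r \<noteq> []" "cyc (p @ r) \<in> C"
    using gs unfolding good_def u_def p_def by blast
  show ?thesis
  proof (cases "r = []")
    case True then show ?thesis using r unfolding p_def by simp
  next
    case False
    have s: "s = u @ p" unfolding u_def p_def by simp
    have pne: "p \<noteq> []" unfolding p_def using ls by simp
    obtain S0 where S0: "s = S0 @ u" using cl unfolding u_def by (auto simp: suffix_def)
    have "suffix u (u @ r)"
    proof -
      have "suffix u (S0 @ u @ r)" using r(1) S0 by simp
      moreover have "suffix (u @ r) (S0 @ u @ r)" by (simp add: suffix_def)
      moreover have "length u \<le> length (u @ r)" by simp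
      ultimately show ?thesis by (rule suffix_length_suffix)
    qed
    moreover have "suffix u (u @ p)" using cl s unfolding u_def by simp
    ultimately show ?thesis using cd r(3) pne False unfolding conductor_def u_def p_def by blast
  qed
qed


lemma dbg_good_walk:
  assumes CS: "chromosome_set C" and D: "dbg G n" and EA: "elab G ` arcs G \<subseteq> Es C n"
    and cond: "\<forall>w. length w = n \<longrightarrow> conductor C w"
  shows "is_walk G v es \<Longrightarrow> es \<noteq> [] \<Longrightarrow> good C n (vlab G v @ steps G es)"
proof (induction es rule: rev_induct)
  case Nil then show ?case by simp
next
  case (snoc e es)
  have AG: "abstract_assembly_graph G" using dbg_abstract[OF D] .
  have w: "is_walk G v es" and e: "e \<in> arcs G" "tail G e = walk_end G v es"
    using snoc.prems(1) is_walk_append[of G v es "[e]"] by auto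
  have ge: "good C n (elab G e)" using good_E[OF CS] EA e(1) by blast
  have st: "step G e = [last (elab G e)]"
  proof -
    have el: "elab G e = vlab G (tail G e) @ step G e" and l1: "length (step G e) = 1"
      using dbg_step[OF D e(1)] by auto
    obtain c where c: "step G e = [c]" using l1 by (cases "step G e") auto
    show ?thesis using el c by simp
  qed
  show ?case
  proof (cases "es = []")
    case True
    have "vlab G v @ steps G (es @ [e]) = elab G e"
      using True dbg_step(1)[OF D e(1)] e(2) by simp
    then show ?thesis using ge by simp
  next
    case False
    define s where "s = vlab G v @ steps G es"
    have gs: "good C n s" using snoc.IH[OF w False] unfolding s_def .
    have lv: "length (vlab G v) = n" using D is_walk_verts[OF w] unfolding dbg_def by auto
    have ls: "n \<le> length s" unfolding s_def using lv by simp
    have le: "length (elab G e) = Suc n" using D e(1) unfolding dbg_def by auto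
    have "suffix (vlab G (walk_end G v es)) s" unfolding s_def using walk_suffix[OF AG w] .
    moreover have "length (vlab G (walk_end G v es)) = n" using D walk_end_verts[OF w] unfolding dbg_def by auto
    ultimately have "vlab G (walk_end G v es) = drop (length s - n) s" using suffix_len_drop[of _ s] by force
    moreover have "take n (elab G e) = vlab G (tail G e)" using D e(1) unfolding dbg_def by auto
    ultimately have te: "take n (elab G e) = drop (length s - n) s" using e(2) by simp
    have "good C n (s @ [last (elab G e)])" using good_extend[OF cond gs ls ge le te] .
    thus ?thesis unfolding s_def using st by simp
  qed
qed

lemma dbg_CPC_sub:
  assumes CS: "chromosome_set C" and D: "dbg G n" and EA: "elab G ` arcs G \<subseteq> Es C n"
    and cond: "\<forall>w. length w = n \<longrightarrow> conductor C w"
  shows "CPC G \<subseteq> C"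
proof
  fix c assume "c \<in> CPC G"
  then obtain v es where v: "c = cyc (drop (length (vlab G v)) (walk_label G v es))"
    "is_walk G v es" "es \<noteq> []" "walk_end G v es = v"
    unfolding CPC_def by blast
  have AG: "abstract_assembly_graph G" using dbg_abstract[OF D] .
  define s where "s = vlab G v @ steps G es"
  have lv: "length (vlab G v) = n" using D is_walk_verts[OF v(2)] unfolding dbg_def by auto
  have c: "c = cyc (drop n s)" using v(1) walk_label_steps[OF AG v(2)] lv unfolding s_def by simp
  have gs: "good C n s" using dbg_good_walk[OF CS D EA cond v(2,3)] unfolding s_def .
  have ls: "n < length s" using dbg_walk_label(1)[OF D v(2)] v(3) unfolding s_def by simp
  have tn: "take n s = vlab G v" unfolding s_def using lv by simp
  have cl: "suffix (take n s) s" using walk_suffix[OF AG v(2)] v(4) tn unfolding s_def by simp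
  have cd: "conductor C (take n s)" using cond ls by simp
  show "c \<in> C" using good_close[OF gs ls cl cd] c by simp
qed

lemma dbg_closed_from_word:
  assumes CS: "chromosome_set C" and D: "dbg G n" and EA: "Es C n \<subseteq> elab G ` arcs G"
    and f: "f \<in> c" "c \<in> C" and v: "v \<in> verts G" "vlab G v = win f 0 n"
  shows "\<exists>es. is_walk G v es \<and> es \<noteq> [] \<and> walk_end G v es = v \<and> cyc (steps G es) = c \<and>
             elab G (hd es) = win f 0 (Suc n)"
proof -
  obtain x where x: "x \<noteq> []" "c = cyc x" "periodic f (length x)" "c = range (\<lambda>k. shift k f)"
    using mem_info[OF CS f] by blast
  define p where "p = length x"
  have p: "p \<ge> 1" unfolding p_def using x(1) by (simp add: Suc_le_eq)
  define s where "s = win f 0 (n + p)"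
  have ls: "length s = n + p" unfolding s_def by simp
  have vs: "vlab G v = take n s" using v(2) unfolding s_def by (simp add: take_win)
  have W: "\<forall>j. j + Suc n \<le> length s \<longrightarrow> take (Suc n) (drop j s) \<in> elab G ` arcs G"
  proof (intro allI impI)
    fix j assume j: "j + Suc n \<le> length s"
    have "take (Suc n) (drop j s) = win f (int j) (Suc n)"
      unfolding s_def using j ls by (simp add: drop_win take_win)
    also have "\<dots> = win (shift (int j) f) 0 (Suc n)" by (simp add: win_shift)
    finally have "take (Suc n) (drop j s) \<in> Es C n"
      unfolding Es_def using shift_closed[OF CS f] f(2) by blast
    thus "take (Suc n) (drop j s) \<in> elab G ` arcs G" using EA by blast
  qed
  obtain es where es: "is_walk G v es" "vlab G v @ steps G es = s"
    using dbg_string_walk[OF D v(1) vs _ W] ls by auto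
  have les: "length es = p" using dbg_walk_label(1)[OF D es(1)] es(2) ls by simp
  have ne: "es \<noteq> []" using les p by auto
  have "vlab G (walk_end G v es) = take n (drop p s)"
    using dbg_walk_label(3)[OF D es(1), rule_format, of p] es(2) les by simp
  also have "\<dots> = win f (int p) n" unfolding s_def by (simp add: drop_win take_win)
  also have "\<dots> = win f 0 n" using win_periodic_shift[OF x(3), of 0 1 n] unfolding p_def by simp
  finally have "vlab G (walk_end G v es) = vlab G v" using v(2) by simp
  hence cl: "walk_end G v es = v" using D walk_end_verts[OF es(1)] v(1) unfolding dbg_def by (meson inj_on_def)
  have lv: "length (vlab G v) = n" using v(2) by simp
  have "steps G es = drop n s" using es(2)[symmetric] lv by simp
  also have "\<dots> = win f (int n) p" unfolding s_def by (simp add: drop_win)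
  finally have "cyc (steps G es) = c" using cyc_win[OF x(3)] x(1,4) unfolding p_def by simp
  moreover have "elab G (hd es) = win f 0 (Suc n)"
  proof -
    have "elab G (es ! 0) = take (Suc n) (drop 0 s)" using dbg_walk_label(2)[OF D es(1)] es(2) ne by simp
    also have "\<dots> = win f 0 (Suc n)" unfolding s_def using p by (simp add: take_win)
    finally show ?thesis using ne by (simp add: hd_conv_nth)
  qed
  ultimately show ?thesis using es(1) ne cl by blast
qed

lemma dbg_C_sub:
  assumes CS: "chromosome_set C" and D: "dbg G n" and EA: "Es C n \<subseteq> elab G ` arcs G"
    and VA: "Vs C n \<subseteq> vlab G ` verts G"
  shows "C \<subseteq> CPC G"
proof
  fix c assume c: "c \<in> C"
  obtain x where x: "x \<noteq> []" "c = cyc x" using CS c unfolding chromosome_set_def is_cyclic_def by blast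
  have f: "per x \<in> c" using x cyc_eq[of x] by (metis rangeI shift_0)
  have "win (per x) 0 n \<in> Vs C n" unfolding Vs_def using f c by blast
  then obtain v where v: "v \<in> verts G" "vlab G v = win (per x) 0 n" using VA by force
  obtain es where es: "is_walk G v es" "es \<noteq> []" "walk_end G v es = v" "cyc (steps G es) = c"
    using dbg_closed_from_word[OF CS D EA f c v] by blast
  show "c \<in> CPC G" using CPC_closed[OF dbg_abstract[OF D] es(1,2,3)] es(4) by simp
qed

lemma dbg_assembly:
  assumes CS: "chromosome_set C" and D: "dbg G n" and EA: "elab G ` arcs G = Es C n"
    and VA: "vlab G ` verts G = Vs C n"
  shows "assembly_graph G"
proof -
  have injE: "inj_on (elab G) (arcs G)" and injV: "inj_on (vlab G) (verts G)"
    using D unfolding dbg_def by blast+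
  have tl: "vlab G (tail G e) = take n (elab G e)" "tail G e \<in> verts G" if "e \<in> arcs G" for e
    using D that unfolding dbg_def by blast+
  have arc_cyc: "\<exists>v es. directed_cycle G v es \<and> e \<in> set es" if e: "e \<in> arcs G" for e
  proof -
    have "elab G e \<in> Es C n" using EA e by blast
    then obtain f c where f: "elab G e = win f 0 (Suc n)" "f \<in> c" "c \<in> C"
      unfolding Es_def by blast
    have tv: "tail G e \<in> verts G" "vlab G (tail G e) = win f 0 n"
      using tl[OF e] f(1) by (auto simp: take_win)
    have EA': "Es C n \<subseteq> elab G ` arcs G" using EA by simp
    obtain es where es: "is_walk G (tail G e) es" "es \<noteq> []" "walk_end G (tail G e) es = tail G e"
      "elab G (hd es) = win f 0 (Suc n)"
      using dbg_closed_from_word[OF CS D EA' f(2,3) tv] by blast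
    have h: "hd es \<in> arcs G" using is_walk_arcs[OF es(1)] hd_in_set[OF es(2)] by blast
    have "hd es = e" using inj_onD[OF injE, of "hd es" e] es(4) f(1) h e by simp
    hence "e \<in> set es" using hd_in_set[OF es(2)] by simp
    thus ?thesis using simple_cycle[OF es(1,2,3)] by blast
  qed
  have vert_cyc: "\<exists>v es. directed_cycle G v es \<and> u \<in> tail G ` set es" if u: "u \<in> verts G" for u
  proof -
    have "vlab G u \<in> Vs C n" using VA u by blast
    then obtain f c where f: "vlab G u = win f 0 n" "f \<in> c" "c \<in> C"
      unfolding Vs_def by blast
    have "win f 0 (Suc n) \<in> Es C n" unfolding Es_def using f by blast
    hence "win f 0 (Suc n) \<in> elab G ` arcs G" using EA by simp
    then obtain e where e: "e \<in> arcs G" "elab G e = win f 0 (Suc n)" by (metis imageE)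
    have "vlab G (tail G e) = win f 0 n" "tail G e \<in> verts G"
      using tl[OF e(1)] e(2) by (auto simp: take_win)
    hence "tail G e = u" using inj_onD[OF injV, of "tail G e" u] u f(1) by simp
    thus ?thesis using arc_cyc[OF e(1)] by blast
  qed
  have noboth: "\<not> (prefix_edge G e \<and> suffix_edge G e)" if e: "e \<in> arcs G" for e
  proof -
    have "length (elab G e) = Suc n" "length (vlab G (head G e)) = n"
      using D e unfolding dbg_def by auto
    thus ?thesis unfolding prefix_edge_def by auto
  qed
  show ?thesis unfolding assembly_graph_def
    using dbg_abstract[OF D] arc_cyc vert_cyc noboth by blast
qed


lemma Vs_fin: "finite (Vs (C :: (int \<Rightarrow> 'a::finite) set set) n)"
proof -
  have "Vs C n \<subseteq> {xs. set xs \<subseteq> UNIV \<and> length xs = n}" unfolding Vs_def by auto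
  thus ?thesis using finite_lists_length_eq[OF finite_UNIV, of n] finite_subset by blast
qed

lemma Es_fin: "finite (Es (C :: (int \<Rightarrow> 'a::finite) set set) n)"
proof -
  have "Es C n \<subseteq> {xs. set xs \<subseteq> UNIV \<and> length xs = Suc n}" unfolding Es_def by auto
  thus ?thesis using finite_lists_length_eq[OF finite_UNIV, of "Suc n"] finite_subset by blast
qed

lemma Es_take: "w \<in> Es C n \<Longrightarrow> take n w \<in> Vs C n"
  unfolding Es_def Vs_def by (auto simp: take_win)

lemma Es_drop:
  assumes CS: "chromosome_set C" and w: "w \<in> Es C n"
  shows "drop 1 w \<in> Vs C n"
proof -
  obtain f c where f: "w = win f 0 (Suc n)" "f \<in> c" "c \<in> C" using w unfolding Es_def by blast
  have "drop 1 w = win f 1 n" unfolding f(1) using drop_win[of 1 "Suc n" f 0] by simp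
  also have "\<dots> = win (shift 1 f) 0 n" by (simp add: win_shift)
  finally show ?thesis unfolding Vs_def using shift_closed[OF CS f(2,3)] f(3) by blast
qed

lemma Es_len: "w \<in> Es C n \<Longrightarrow> length w = Suc n" unfolding Es_def by auto
lemma Vs_len: "w \<in> Vs C n \<Longrightarrow> length w = n" unfolding Vs_def by auto

lemma exists_dbg:
  fixes C :: "(int \<Rightarrow> 'a::finite) set set"
  assumes CS: "chromosome_set C"
  shows "\<exists>G :: (nat, nat, 'a) agraph. finite_graph G \<and> dbg G n \<and> elab G ` arcs G = Es C n \<and>
            vlab G ` verts G = Vs C n"
proof -
  obtain gV where bV: "bij_betw gV {0..<card (Vs C n)} (Vs C n)" using ex_bij_betw_nat_finite[OF Vs_fin] by blast
  obtain gE where bE: "bij_betw gE {0..<card (Es C n)} (Es C n)" using ex_bij_betw_nat_finite[OF Es_fin] by blast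
  define NV where "NV = card (Vs C n)"
  define NE where "NE = card (Es C n)"
  define tl where "tl e = the_inv_into {0..<NV} gV (take n (gE e))" for e
  define hd' where "hd' e = the_inv_into {0..<NV} gV (drop 1 (gE e))" for e
  define G :: "(nat, nat, 'a) agraph" where
    "G = \<lparr>verts = {0..<NV}, arcs = {0..<NE}, tail = tl, head = hd', vlab = gV, elab = gE\<rparr>"
  have injV: "inj_on gV {0..<NV}" using bV unfolding NV_def bij_betw_def by blast
  have imV: "gV ` {0..<NV} = Vs C n" using bV unfolding NV_def bij_betw_def by blast
  have injE: "inj_on gE {0..<NE}" using bE unfolding NE_def bij_betw_def by blast
  have imE: "gE ` {0..<NE} = Es C n" using bE unfolding NE_def bij_betw_def by blast
  have arcs_ok: "tl e \<in> {0..<NV} \<and> hd' e \<in> {0..<NV} \<and> length (gE e) = Suc n \<and>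
      gV (tl e) = take n (gE e) \<and> gV (hd' e) = drop 1 (gE e)" if e: "e \<in> {0..<NE}" for e
  proof -
    have gE: "gE e \<in> Es C n" using imE e by blast
    have t: "take n (gE e) \<in> gV ` {0..<NV}" using Es_take[OF gE] imV by simp
    have d: "drop 1 (gE e) \<in> gV ` {0..<NV}" using Es_drop[OF CS gE] imV by simp
    show ?thesis unfolding tl_def hd'_def
      using the_inv_into_into[OF injV t order_refl] the_inv_into_into[OF injV d order_refl]
        f_the_inv_into_f[OF injV t] f_the_inv_into_f[OF injV d] Es_len[OF gE] by simp
  qed
  have vl: "length (gV v) = n" if "v \<in> {0..<NV}" for v
    using imV that Vs_len by blast
  have "dbg G n" unfolding dbg_def G_def
    using arcs_ok injV injE vl by auto
  moreover have "finite_graph G" unfolding finite_graph_def G_def by simp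
  moreover have "elab G ` arcs G = Es C n" "vlab G ` verts G = Vs C n" unfolding G_def using imE imV by auto
  ultimately show ?thesis by blast
qed

theorem mainTheorem6:
  fixes C :: "(int \<Rightarrow> 'a::finite) set set"
  assumes "chromosome_set C"
  shows "(\<exists>G :: (nat, nat, 'a) agraph.
            finite_graph G \<and> assembly_graph G \<and> non_redundant G \<and> CPC G = C)
         \<longleftrightarrow> finitely_conducting C"
proof
  assume "\<exists>G :: (nat, nat, 'a) agraph. finite_graph G \<and> assembly_graph G \<and> non_redundant G \<and> CPC G = C"
  then obtain G :: "(nat, nat, 'a) agraph" where G: "finite_graph G" "assembly_graph G" "non_redundant G" "CPC G = C"
    by blast
  show "finitely_conducting C" using graph_conducting[OF G(2,3,1)] G(4) by simp
next
  assume "finitely_conducting C"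
  then obtain K where K: "\<forall>v. K \<le> length v \<longrightarrow> conductor C v" unfolding finitely_conducting_def by blast
  have cond: "\<forall>w. length w = K \<longrightarrow> conductor C w" using K by simp
  obtain G :: "(nat, nat, 'a) agraph" where G: "finite_graph G" "dbg G K" "elab G ` arcs G = Es C K"
    "vlab G ` verts G = Vs C K"
    using exists_dbg[OF assms] by blast
  have "assembly_graph G" using dbg_assembly[OF assms G(2,3,4)] .
  moreover have "non_redundant G" using dbg_nonredundant[OF G(2)] .
  moreover have "CPC G = C"
    using dbg_CPC_sub[OF assms G(2) _ cond] dbg_C_sub[OF assms G(2)] G(3,4) by blast
  ultimately show "\<exists>G :: (nat, nat, 'a) agraph. finite_graph G \<and> assembly_graph G \<and> non_redundant G \<and> CPC G = C"
    using G(1) by blast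
qed


end
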